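(* Let $T$ be the linear operator on $L^2(0,\pi/2)$ defined by $(Tf)(v)=\int_0^{(\pi/2)-v} f(u)\,du$, and let $n\ge 1$ be an integer. Then $T^n$ is a compact self-adjoint operator on $L^2(0,\pi/2)$, whose eigenvalues are exactly $1/(4k+1)^n$ for $k\in\mathbf{Z}$, each of multiplicity one, with corresponding eigenfunctions $u\mapsto\cos((4k+1)u)$. *)

theory Defs
  imports "HOL-Analysis.Analysis"
begin

text \<open>Real L^2(0,pi/2): square-integrable functions on [0,pi/2] (equality is a.e.).\<close>

abbreviation I :: "real measure" where
  "I \<equiv> lebesgue_on {0..pi/2}"

definition L2 :: "(real \<Rightarrow> real) set" where
  "L2 = {f. f \<in> borel_measurable I \<and> integrable I (\<lambda>x. (f x)\<^sup>2)}"

definition ae_eq :: "(real \<Rightarrow> real) \<Rightarrow> (real \<Rightarrow> real) \<Rightarrow> bool" where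
  "ae_eq f g \<longleftrightarrow> (AE x in I. f x = g x)"

definition inner_L2 :: "(real \<Rightarrow> real) \<Rightarrow> (real \<Rightarrow> real) \<Rightarrow> real" where
  "inner_L2 f g = (\<integral>x. f x * g x \<partial>I)"

definition norm_L2 :: "(real \<Rightarrow> real) \<Rightarrow> real" where
  "norm_L2 f = sqrt (inner_L2 f f)"

definition Top :: "(real \<Rightarrow> real) \<Rightarrow> (real \<Rightarrow> real)" where
  "Top f = (\<lambda>v. LINT u:{0..pi/2 - v}|lebesgue. f u)"

definition compact_op_L2 :: "((real \<Rightarrow> real) \<Rightarrow> (real \<Rightarrow> real)) \<Rightarrow> bool" where
  "compact_op_L2 S \<longleftrightarrow>
     (\<forall>f\<in>L2. S f \<in> L2) \<and>
     (\<forall>f\<in>L2. \<forall>g\<in>L2. \<forall>a b. ae_eq (S (\<lambda>x. a * f x + b * g x)) (\<lambda>x. a * S f x + b * S g x)) \<and>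
     (\<forall>f\<in>L2. \<forall>g\<in>L2. ae_eq f g \<longrightarrow> ae_eq (S f) (S g)) \<and>
     (\<forall>F :: nat \<Rightarrow> real \<Rightarrow> real. (\<forall>k. F k \<in> L2) \<and> bounded (range (\<lambda>k. norm_L2 (F k))) \<longrightarrow>
        (\<exists>r g. strict_mono r \<and> g \<in> L2 \<and>
               (\<lambda>k. norm_L2 (\<lambda>x. S (F (r k)) x - g x)) \<longlonglongrightarrow> 0))"

definition self_adjoint_L2 :: "((real \<Rightarrow> real) \<Rightarrow> (real \<Rightarrow> real)) \<Rightarrow> bool" where
  "self_adjoint_L2 S \<longleftrightarrow> (\<forall>f\<in>L2. \<forall>g\<in>L2. inner_L2 (S f) g = inner_L2 f (S g))"

definition eigenvalue_L2 :: "((real \<Rightarrow> real) \<Rightarrow> (real \<Rightarrow> real)) \<Rightarrow> real \<Rightarrow> bool" where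
  "eigenvalue_L2 S c \<longleftrightarrow> (\<exists>f\<in>L2. \<not> ae_eq f (\<lambda>x. 0) \<and> ae_eq (S f) (\<lambda>x. c * f x))"

end

theory Submission
  imports Defs "HOL-Library.Diagonal_Subsequence"
begin
abbreviation JJ :: "real set" where "JJ \<equiv> {0..pi/2}"

lemma space_I[simp]: "space I = JJ" by simp

lemma JJ_lmeas[simp]: "JJ \<in> sets lebesgue" by simp

lemma AE_I_all: "(\<And>x. x \<in> JJ \<Longrightarrow> P x) \<Longrightarrow> AE x in I. P x"
  by (rule AE_I2) auto

lemma finite_I: "finite_measure I"
  by (rule finite_measure_lebesgue_on) simp

lemma integrable_I_const[simp]: "integrable I (\<lambda>x. c::real)"
  using finite_measure.integrable_const[OF finite_I] by blast

lemma L2D: assumes "f \<in> L2" shows "f \<in> borel_measurable I" "integrable I (\<lambda>x. (f x)\<^sup>2)"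
  using assms by (auto simp: L2_def)

lemma L2_integrable: assumes "f \<in> L2" shows "integrable I f"
proof (rule Bochner_Integration.integrable_bound)
  show "integrable I (\<lambda>x. 1 + (f x)\<^sup>2)" using L2D[OF assms] by simp
  show "f \<in> borel_measurable I" using L2D[OF assms] by simp
  show "AE x in I. norm (f x) \<le> norm (1 + (f x)\<^sup>2)"
  proof (rule AE_I2)
    fix x
    have "\<bar>f x\<bar> \<le> 1 + (f x)\<^sup>2"
    proof (cases "\<bar>f x\<bar> \<le> 1")
      case True then show ?thesis using zero_le_power2[of "f x"] by linarith
    next
      case False then have "1 * \<bar>f x\<bar> \<le> \<bar>f x\<bar> * \<bar>f x\<bar>" by (intro mult_right_mono) auto
      then show ?thesis by (simp add: power2_eq_square abs_mult_self_eq)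
    qed
    then show "norm (f x) \<le> norm (1 + (f x)\<^sup>2)" by simp
  qed
qed

lemma L2_mult_integrable: assumes "f \<in> L2" "g \<in> L2" shows "integrable I (\<lambda>x. f x * g x)"
proof (rule Bochner_Integration.integrable_bound)
  show "integrable I (\<lambda>x. (f x)\<^sup>2 + (g x)\<^sup>2)" using L2D[OF assms(1)] L2D[OF assms(2)] by simp
  show "(\<lambda>x. f x * g x) \<in> borel_measurable I" using L2D[OF assms(1)] L2D[OF assms(2)] by simp
  show "AE x in I. norm (f x * g x) \<le> norm ((f x)\<^sup>2 + (g x)\<^sup>2)"
  proof (rule AE_I2)
    fix x
    have "\<bar>f x * g x\<bar> \<le> (f x)\<^sup>2 + (g x)\<^sup>2"
    proof -
      have "0 \<le> (\<bar>f x\<bar> - \<bar>g x\<bar>)\<^sup>2" by simp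
      then have "2 * (\<bar>f x\<bar> * \<bar>g x\<bar>) \<le> (f x)\<^sup>2 + (g x)\<^sup>2"
        by (simp add: power2_eq_square algebra_simps)
      moreover have "0 \<le> \<bar>f x\<bar> * \<bar>g x\<bar>" by simp
      ultimately show ?thesis unfolding abs_mult by linarith
    qed
    then show "norm (f x * g x) \<le> norm ((f x)\<^sup>2 + (g x)\<^sup>2)" by simp
  qed
qed

lemma L2_lin: assumes "f \<in> L2" "g \<in> L2" shows "(\<lambda>x. a * f x + b * g x) \<in> L2"
proof -
  have m: "(\<lambda>x. a * f x + b * g x) \<in> borel_measurable I" using L2D[OF assms(1)] L2D[OF assms(2)] by simp
  have "integrable I (\<lambda>x. (a * f x + b * g x)\<^sup>2)"
  proof (rule Bochner_Integration.integrable_bound)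
    show "integrable I (\<lambda>x. 2 * a\<^sup>2 * (f x)\<^sup>2 + 2 * b\<^sup>2 * (g x)\<^sup>2)" using L2D[OF assms(1)] L2D[OF assms(2)] by simp
    show "(\<lambda>x. (a * f x + b * g x)\<^sup>2) \<in> borel_measurable I" using m by simp
    show "AE x in I. norm ((a * f x + b * g x)\<^sup>2) \<le> norm (2 * a\<^sup>2 * (f x)\<^sup>2 + 2 * b\<^sup>2 * (g x)\<^sup>2)"
    proof (rule AE_I2)
      fix x
      have "0 \<le> (a * f x - b * g x)\<^sup>2" by simp
      then have "(a * f x + b * g x)\<^sup>2 \<le> 2 * a\<^sup>2 * (f x)\<^sup>2 + 2 * b\<^sup>2 * (g x)\<^sup>2"
        by (simp add: power2_eq_square algebra_simps)
      then show "norm ((a * f x + b * g x)\<^sup>2) \<le> norm (2 * a\<^sup>2 * (f x)\<^sup>2 + 2 * b\<^sup>2 * (g x)\<^sup>2)"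
        by simp
    qed
  qed
  with m show ?thesis by (simp add: L2_def)
qed

lemma cont_L2: assumes "continuous_on JJ g" shows "g \<in> L2"
proof -
  have "g \<in> borel_measurable I"
    by (rule continuous_imp_measurable_on_sets_lebesgue[OF assms]) simp
  moreover have "integrable I (\<lambda>x. (g x)\<^sup>2)"
    by (rule continuous_imp_integrable_real) (intro continuous_intros assms)
  ultimately show ?thesis by (simp add: L2_def)
qed

lemma set_int_I:
  fixes f :: "real \<Rightarrow> real"
  assumes "S \<subseteq> JJ" "S \<in> sets lebesgue"
  shows "(LINT u:S|lebesgue. f u) = (\<integral>u. indicator S u * f u \<partial>I)"
proof -
  have "(\<integral>u. indicator S u * f u \<partial>I) = (\<integral>u. indicator JJ u *\<^sub>R (indicator S u * f u) \<partial>lebesgue)"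
    using integral_restrict_space[of JJ lebesgue "\<lambda>u. indicator S u * f u :: real"] by simp
  also have "\<dots> = (LINT u:S|lebesgue. f u)"
    unfolding set_lebesgue_integral_def
    by (rule Bochner_Integration.integral_cong) (use assms(1) in \<open>auto simp: indicator_def\<close>)
  finally show ?thesis by simp
qed

lemma Top_I: assumes "v \<in> JJ" shows "Top f v = (\<integral>u. indicator {0..pi/2-v} u * f u \<partial>I)"
  unfolding Top_def using assms by (intro set_int_I) auto

lemma integrable_I_iff: "integrable I (f::real\<Rightarrow>real) \<longleftrightarrow> set_integrable lebesgue JJ f"
  unfolding set_integrable_def using integrable_restrict_space[of JJ lebesgue f] by simp

lemma L2_absint: assumes "f \<in> L2" "S \<subseteq> JJ" "S \<in> sets lebesgue" shows "f absolutely_integrable_on S"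
  using set_integrable_subset[of lebesgue JJ f S] L2_integrable[OF assms(1)] assms(2,3)
  by (simp add: integrable_I_iff)

lemma Top_HK: assumes "f \<in> L2" "v \<in> JJ" shows "Top f v = integral {0..pi/2-v} f"
  unfolding Top_def
  using set_lebesgue_integral_eq_integral(2)[OF L2_absint[OF assms(1), of "{0..pi/2-v}"]] assms(2) by auto

lemma meas_ind_I: "(\<lambda>u. indicator {a..b} u * f u) \<in> borel_measurable I" if "f \<in> borel_measurable I" for a b :: real and f :: "real \<Rightarrow> real"
proof -
  have "(indicator {a..b} :: real \<Rightarrow> real) \<in> borel_measurable lebesgue" by (rule borel_measurable_indicator) simp
  then have "(\<lambda>u. indicator {a..b} u :: real) \<in> borel_measurable I"
    by (rule measurable_restrict_space1)
  then show ?thesis using that by simp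
qed

lemma Top_ae: assumes "f \<in> L2" "g \<in> L2" "ae_eq f g" "v \<in> JJ" shows "Top f v = Top g v"
proof -
  have "(\<integral>u. indicator {0..pi/2-v} u * f u \<partial>I) = (\<integral>u. indicator {0..pi/2-v} u * g u \<partial>I)"
  proof (rule integral_cong_AE)
    show "(\<lambda>u. indicator {0..pi/2-v} u * f u) \<in> borel_measurable I" by (rule meas_ind_I) (rule L2D[OF assms(1)])
    show "(\<lambda>u. indicator {0..pi/2-v} u * g u) \<in> borel_measurable I" by (rule meas_ind_I) (rule L2D[OF assms(2)])
    show "AE x in I. indicator {0..pi/2-v} x * f x = indicator {0..pi/2-v} x * g x"
      using assms(3) unfolding ae_eq_def by eventually_elim simp
  qed
  then show ?thesis using Top_I[OF assms(4)] by simp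
qed

lemma HK_int: assumes "f \<in> L2" "x \<in> JJ" shows "f integrable_on {0..x}"
  using set_lebesgue_integral_eq_integral(1)[OF L2_absint[OF assms(1), of "{0..x}"]] assms(2) by auto

lemma Top_lin: assumes "f \<in> L2" "g \<in> L2" "v \<in> JJ"
  shows "Top (\<lambda>x. a * f x + b * g x) v = a * Top f v + b * Top g v"
proof -
  have vv: "pi/2 - v \<in> JJ" using assms(3) by auto
  have i1: "(\<lambda>x. a * f x) integrable_on {0..pi/2-v}"
    using integrable_cmul[OF HK_int[OF assms(1) vv], of a] by simp
  have i2: "(\<lambda>x. b * g x) integrable_on {0..pi/2-v}"
    using integrable_cmul[OF HK_int[OF assms(2) vv], of b] by simp
  have "integral {0..pi/2-v} (\<lambda>x. a * f x + b * g x) = integral {0..pi/2-v} (\<lambda>x. a * f x) + integral {0..pi/2-v} (\<lambda>x. b * g x)"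
    by (rule integral_add[OF i1 i2])
  also have "\<dots> = a * integral {0..pi/2-v} f + b * integral {0..pi/2-v} g"
    using integral_cmul[of "{0..pi/2-v}" a f] integral_cmul[of "{0..pi/2-v}" b g] by simp
  finally show ?thesis
    using Top_HK[OF L2_lin[OF assms(1,2)] assms(3), of a b] Top_HK[OF assms(1,3)] Top_HK[OF assms(2,3)] by simp
qed

lemma Top_cont: assumes "f \<in> L2" shows "continuous_on JJ (Top f)"
proof -
  have c: "continuous_on JJ (\<lambda>x. integral {0..x} f)"
    by (rule indefinite_integral_continuous_1) (rule HK_int[OF assms], simp)
  have "continuous_on JJ (\<lambda>v. integral {0..pi/2-v} f)"
    by (rule continuous_on_compose2[OF c]) (auto intro!: continuous_intros)
  then show ?thesis
    by (rule continuous_on_eq) (simp add: Top_HK[OF assms])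
qed

lemma Top_L2: "f \<in> L2 \<Longrightarrow> Top f \<in> L2"
  by (rule cont_L2) (rule Top_cont)

lemma Top_deriv:
  assumes "continuous_on JJ g" "v \<in> JJ"
  shows "(Top g has_real_derivative - g (pi/2 - v)) (at v within JJ)"
proof -
  have gL: "g \<in> L2" by (rule cont_L2[OF assms(1)])
  have vv: "pi/2 - v \<in> JJ" using assms(2) by auto
  have d1: "((\<lambda>x. integral {0..x} g) has_real_derivative g (pi/2 - v)) (at (pi/2 - v) within JJ)"
    by (rule integral_has_real_derivative[OF assms(1) vv])
  have im: "(\<lambda>x. pi/2 - x) ` JJ = JJ"
  proof
    show "(\<lambda>x. pi/2 - x) ` JJ \<subseteq> JJ" by auto
    show "JJ \<subseteq> (\<lambda>x. pi/2 - x) ` JJ"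
    proof
      fix y assume "y \<in> JJ" then show "y \<in> (\<lambda>x. pi/2 - x) ` JJ"
        by (intro image_eqI[of _ _ "pi/2 - y"]) auto
    qed
  qed
  have d2: "((\<lambda>x. pi/2 - x) has_real_derivative -1) (at v within JJ)"
    by (auto intro!: derivative_eq_intros)
  have "((\<lambda>x. integral {0..x} g) \<circ> (\<lambda>x. pi/2 - x) has_real_derivative g (pi/2 - v) * -1) (at v within JJ)"
    by (rule DERIV_image_chain[OF _ d2]) (use d1 im in simp)
  then have "((\<lambda>x. integral {0..pi/2-x} g) has_real_derivative - g (pi/2 - v)) (at v within JJ)"
    by (simp add: o_def)
  then show ?thesis
    by (rule has_field_derivative_transform_within[where d=1]) (use assms(2) Top_HK[OF gL] in auto)
qed

lemma int_cos: fixes m x :: real assumes "m \<noteq> 0" "0 \<le> x" shows "integral {0..x} (\<lambda>u. cos (m * u)) = sin (m * x) / m"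
proof -
  have dd: "((\<lambda>u. sin (m * u) / m) has_vector_derivative cos (m * t)) (at t within {0..x})" for t
      unfolding has_real_derivative_iff_has_vector_derivative[symmetric]
      using assms(1) by (auto intro!: derivative_eq_intros)
  have "((\<lambda>u. cos (m * u)) has_integral (sin (m * x) / m - sin (m * 0) / m)) {0..x}"
    using fundamental_theorem_of_calculus[of 0 x "\<lambda>u. sin (m*u)/m" "\<lambda>u. cos(m*u)", OF assms(2)] dd by simp
  then show ?thesis by (simp add: integral_unique)
qed

lemma sin_m_half: "sin ((4 * of_int k + 1) * (pi/2)) = 1" "cos ((4 * of_int k + 1) * (pi/2)) = 0"
proof -
  have e: "(4 * of_int k + 1) * (pi/2) = (2*pi) * of_int k + pi/2" by (simp add: algebra_simps)
  show "sin ((4 * of_int k + 1) * (pi/2)) = 1" unfolding e sin_add by simp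
  show "cos ((4 * of_int k + 1) * (pi/2)) = 0" unfolding e cos_add by simp
qed

lemma m_nonzero: "(4 * of_int k + 1 :: real) \<noteq> 0"
proof
  assume "(4 * of_int k + 1 :: real) = 0"
  then have "(of_int (4 * k + 1) :: real) = of_int 0" by simp
  then have "4 * k + 1 = 0" by (simp only: of_int_eq_iff)
  then show False by presburger
qed

lemma cos_L2: "(\<lambda>u. cos (m * u)) \<in> L2"
  by (rule cont_L2) (auto intro!: continuous_intros)

lemma Top_cos: assumes "v \<in> JJ"
  shows "Top (\<lambda>u. cos ((4 * of_int k + 1) * u)) v = (1 / (4 * of_int k + 1)) * cos ((4 * of_int k + 1) * v)"
proof -
  let ?m = "4 * of_int k + 1 :: real"
  have "Top (\<lambda>u. cos (?m * u)) v = integral {0..pi/2-v} (\<lambda>u. cos (?m * u))"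
    by (rule Top_HK[OF cos_L2 assms])
  also have "\<dots> = sin (?m * (pi/2 - v)) / ?m"
    by (rule int_cos[OF m_nonzero]) (use assms in auto)
  also have "sin (?m * (pi/2 - v)) = cos (?m * v)"
  proof -
    have "?m * (pi/2 - v) = ?m * (pi/2) - ?m * v" by (simp add: algebra_simps)
    then show ?thesis using sin_m_half[of k] by (simp add: sin_diff)
  qed
  finally show ?thesis by simp
qed

lemma im_refl: "(\<lambda>x. pi/2 - x) ` JJ = JJ"
proof
  show "(\<lambda>x. pi/2 - x) ` JJ \<subseteq> JJ" by auto
  show "JJ \<subseteq> (\<lambda>x. pi/2 - x) ` JJ"
  proof
    fix y assume "y \<in> JJ" then show "y \<in> (\<lambda>x. pi/2 - x) ` JJ"
      by (intro image_eqI[of _ _ "pi/2 - y"]) auto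
  qed
qed

lemma deriv_refl:
  assumes "\<And>v. v \<in> JJ \<Longrightarrow> (g has_real_derivative g' v) (at v within JJ)" "v \<in> JJ"
  shows "((\<lambda>x. g (pi/2 - x)) has_real_derivative - g' (pi/2 - v)) (at v within JJ)"
proof -
  have vv: "pi/2 - v \<in> JJ" using assms(2) by auto
  have d2: "((\<lambda>x. pi/2 - x) has_real_derivative -1) (at v within JJ)"
    by (auto intro!: derivative_eq_intros)
  have "(g \<circ> (\<lambda>x. pi/2 - x) has_real_derivative g' (pi/2 - v) * -1) (at v within JJ)"
    by (rule DERIV_image_chain[OF _ d2]) (use assms(1)[OF vv] im_refl in simp)
  then show ?thesis by (simp add: o_def)
qed

lemma d_cos: "((\<lambda>x. cos (w * x)) has_real_derivative - (w * sin (w * v))) (at v within S)"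
  by (auto intro!: derivative_eq_intros)

lemma d_sin: "((\<lambda>x. sin (w * x)) has_real_derivative (w * cos (w * v))) (at v within S)"
  by (auto intro!: derivative_eq_intros)

lemma sin_eq_one_int: assumes "sin x = 1" shows "\<exists>n::int. x = of_int n * 2 * pi + pi/2"
proof -
  have "cos (x - pi/2) = sin x" by (simp add: cos_diff)
  then have "cos (x - pi/2) = 1" using assms by simp
  then obtain n :: int where "x - pi/2 = of_int n * 2 * pi" using cos_one_2pi_int by blast
  then show ?thesis by (intro exI[of _ n]) linarith
qed

lemma ode_eig:
  fixes g :: "real \<Rightarrow> real" and lam :: real
  assumes gc: "continuous_on JJ g" and lam: "lam \<noteq> 0" and eq: "\<And>v. v \<in> JJ \<Longrightarrow> Top g v = lam * g v"
  shows "(\<forall>v\<in>JJ. g v = g 0 * cos (v / lam)) \<and> (g 0 \<noteq> 0 \<longrightarrow> (\<exists>k::int. 1 / lam = 4 * of_int k + 1))"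
proof -
  define w where "w = 1 / lam"
  have w0: "w \<noteq> 0" using lam by (simp add: w_def)
  have geq: "g v = w * Top g v" if "v \<in> JJ" for v using eq[OF that] lam by (simp add: w_def)
  define p where "p v = - w * g (pi/2 - v)" for v
  have dg: "(g has_real_derivative p v) (at v within JJ)" if "v \<in> JJ" for v
  proof -
    have "((\<lambda>x. w * Top g x) has_real_derivative p v) (at v within JJ)"
      using DERIV_cmult[OF Top_deriv[OF gc that], of w] by (simp add: p_def)
    then show ?thesis
      by (rule has_field_derivative_transform_within[where d=1]) (use that geq in auto)
  qed
  have dp: "(p has_real_derivative - (w * w) * g v) (at v within JJ)" if "v \<in> JJ" for v
  proof -
    have "((\<lambda>x. g (pi/2 - x)) has_real_derivative - p (pi/2 - v)) (at v within JJ)"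
      by (rule deriv_refl[OF dg that])
    then have "((\<lambda>x. - w * g (pi/2 - x)) has_real_derivative - w * (- p (pi/2 - v))) (at v within JJ)"
      by (rule DERIV_cmult)
    then show ?thesis by (simp add: p_def[abs_def] mult.assoc)
  qed
  define A where "A = g 0"
  define phi where "phi v = g v - A * cos (w * v)" for v
  define psi where "psi v = p v + A * w * sin (w * v)" for v
  have dphi: "(phi has_real_derivative psi v) (at v within JJ)" if "v \<in> JJ" for v
  proof -
    have "((\<lambda>x. g x - A * cos (w * x)) has_real_derivative p v - A * (- (w * sin (w * v)))) (at v within JJ)"
      by (intro DERIV_diff dg[OF that] DERIV_cmult d_cos)
    then show ?thesis unfolding phi_def[abs_def] psi_def by (simp add: algebra_simps)
  qed
  have dpsi: "(psi has_real_derivative - (w * w) * phi v) (at v within JJ)" if "v \<in> JJ" for v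
  proof -
    have "((\<lambda>x. p x + (A * w) * sin (w * x)) has_real_derivative - (w * w) * g v + (A * w) * (w * cos (w * v))) (at v within JJ)"
      by (intro DERIV_add dp[OF that] DERIV_cmult d_sin)
    then show ?thesis unfolding phi_def psi_def[abs_def] by (simp add: algebra_simps)
  qed
  define E where "E v = (w * w) * (phi v * phi v) + psi v * psi v" for v
  have dE: "(E has_real_derivative 0) (at v within JJ)" if "v \<in> JJ" for v
  proof -
    have "(E has_real_derivative (w * w) * (psi v * phi v + psi v * phi v) + ((- (w * w) * phi v) * psi v + (- (w * w) * phi v) * psi v)) (at v within JJ)"
      unfolding E_def[abs_def]
      by (intro DERIV_add DERIV_cmult DERIV_mult dphi[OF that] dpsi[OF that])
    then show ?thesis by (simp add: algebra_simps)
  qed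
  have "\<exists>c. \<forall>x\<in>JJ. E x = c"
    by (rule has_field_derivative_zero_constant) (simp_all add: dE)
  then obtain c where c: "\<And>v. v \<in> JJ \<Longrightarrow> E v = c" by blast
  have gh: "g (pi/2) = 0"
  proof -
    have "Top g (pi/2) = integral {0..0} g" using Top_HK[OF cont_L2[OF gc], of "pi/2"] by simp
    then have "Top g (pi/2) = 0" by simp
    then show ?thesis using geq[of "pi/2"] by simp
  qed
  have "E 0 = 0" unfolding E_def phi_def psi_def p_def A_def using gh by simp
  then have c0: "c = 0" using c[of 0] by simp
  have phi0: "phi v = 0" if "v \<in> JJ" for v
  proof -
    have "(w * w) * (phi v * phi v) + psi v * psi v = 0" using c[OF that] c0 by (simp add: E_def)
    moreover have "0 \<le> (w * w) * (phi v * phi v)" by simp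
    moreover have "0 \<le> psi v * psi v" by simp
    ultimately have "(w * w) * (phi v * phi v) = 0" by linarith
    then show ?thesis using w0 by simp
  qed
  have gcos: "g v = A * cos (w * v)" if "v \<in> JJ" for v
    using phi0[OF that] by (simp add: phi_def)
  have part1: "\<forall>v\<in>JJ. g v = g 0 * cos (v / lam)"
  proof
    fix v assume "v \<in> JJ"
    then have "g v = A * cos (w * v)" by (rule gcos)
    also have "A * cos (w * v) = g 0 * cos (v / lam)" by (simp add: A_def w_def)
    finally show "g v = g 0 * cos (v / lam)" .
  qed
  have part2: "\<exists>k::int. 1 / lam = 4 * of_int k + 1" if "g 0 \<noteq> 0"
  proof -
    have "Top g 0 = integral {0..pi/2} g" using Top_HK[OF cont_L2[OF gc], of 0] by simp
    also have "\<dots> = integral {0..pi/2} (\<lambda>u. A * cos (w * u))"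
      by (rule integral_cong) (use gcos in auto)
    also have "\<dots> = A * integral {0..pi/2} (\<lambda>u. cos (w * u))"
      using integral_cmul[of "{0..pi/2}" A "\<lambda>u. cos (w * u)"] by simp
    also have "\<dots> = A * (sin (w * (pi/2)) / w)"
      using int_cos[OF w0, of "pi/2"] by simp
    finally have "Top g 0 = A * (sin (w * (pi/2)) / w)" .
    then have "g 0 = A * sin (w * (pi/2))" using geq[of 0] w0 by simp
    then have "sin (w * (pi/2)) = 1" using that by (simp add: A_def)
    then obtain n :: int where n: "w * (pi/2) = of_int n * 2 * pi + pi/2" using sin_eq_one_int by blast
    have "w * (pi/2) = (4 * of_int n + 1) * (pi/2)" using n by (simp add: algebra_simps)
    then have "w = 4 * of_int n + 1" by simp
    then show ?thesis by (auto simp: w_def)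
  qed
  show ?thesis using part1 part2 by blast
qed

lemma ae_refl: "ae_eq f f" by (simp add: ae_eq_def)
lemma ae_sym: assumes "ae_eq f g" shows "ae_eq g f"
  using assms unfolding ae_eq_def by eventually_elim simp
lemma ae_trans: assumes "ae_eq f g" "ae_eq g k" shows "ae_eq f k"
  using assms unfolding ae_eq_def by eventually_elim simp
lemma eqJ_ae: "(\<And>x. x \<in> JJ \<Longrightarrow> f x = g x) \<Longrightarrow> ae_eq f g"
  unfolding ae_eq_def by (rule AE_I_all)
lemma ae_lin: assumes "ae_eq f f'" "ae_eq g g'" shows "ae_eq (\<lambda>x. a * f x + b * g x) (\<lambda>x. a * f' x + b * g' x)"
  using assms unfolding ae_eq_def by eventually_elim simp

lemma inner_sym: "inner_L2 f g = inner_L2 g f"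
  unfolding inner_L2_def by (simp add: mult.commute)

lemma inner_lin: assumes "f \<in> L2" "g \<in> L2" "k \<in> L2"
  shows "inner_L2 (\<lambda>x. a * f x + b * g x) k = a * inner_L2 f k + b * inner_L2 g k"
proof -
  have "inner_L2 (\<lambda>x. a * f x + b * g x) k = (\<integral>x. a * (f x * k x) + b * (g x * k x) \<partial>I)"
    unfolding inner_L2_def by (simp add: algebra_simps)
  also have "\<dots> = (\<integral>x. a * (f x * k x) \<partial>I) + (\<integral>x. b * (g x * k x) \<partial>I)"
    by (rule Bochner_Integration.integral_add) (use L2_mult_integrable[OF assms(1,3)] L2_mult_integrable[OF assms(2,3)] in simp_all)
  also have "\<dots> = a * inner_L2 f k + b * inner_L2 g k"
    unfolding inner_L2_def by simp
  finally show ?thesis .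
qed

lemma inner_ae: assumes "f \<in> L2" "f' \<in> L2" "k \<in> L2" "ae_eq f f'"
  shows "inner_L2 f k = inner_L2 f' k"
  unfolding inner_L2_def
proof (rule integral_cong_AE)
  show "(\<lambda>x. f x * k x) \<in> borel_measurable I" using L2D(1)[OF assms(1)] L2D(1)[OF assms(3)] by simp
  show "(\<lambda>x. f' x * k x) \<in> borel_measurable I" using L2D(1)[OF assms(2)] L2D(1)[OF assms(3)] by simp
  show "AE x in I. f x * k x = f' x * k x" using assms(4) unfolding ae_eq_def by eventually_elim simp
qed

lemma inner_eqJ: assumes "\<And>x. x \<in> JJ \<Longrightarrow> f x = f' x"
  shows "inner_L2 f k = inner_L2 f' k"
  unfolding inner_L2_def by (rule Bochner_Integration.integral_cong) (use assms in auto)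

lemma inner_self_nonneg: "0 \<le> inner_L2 f f"
  unfolding inner_L2_def by (rule integral_nonneg_AE) simp

lemma inner_self_zero: assumes "f \<in> L2" "inner_L2 f f = 0" shows "ae_eq f (\<lambda>x. 0)"
proof -
  have "AE x in I. f x * f x = 0"
    using integral_nonneg_eq_0_iff_AE[of I "\<lambda>x. f x * f x"] L2_mult_integrable[OF assms(1,1)] assms(2)
    by (simp add: inner_L2_def)
  then show ?thesis unfolding ae_eq_def by eventually_elim simp
qed

lemma id_meas_I: "(\<lambda>x::real. x) \<in> borel_measurable I"
  by (rule continuous_imp_measurable_on_sets_lebesgue) (auto intro: continuous_intros)

lemma Top_selfadj: assumes "f \<in> L2" "g \<in> L2" shows "inner_L2 (Top f) g = inner_L2 f (Top g)"
proof -
  interpret FI: finite_measure I by (rule finite_I)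
  interpret PP: pair_sigma_finite I I by unfold_locales
  have fm: "f \<in> borel_measurable I" and gm: "g \<in> borel_measurable I"
    using L2D(1)[OF assms(1)] L2D(1)[OF assms(2)] by auto
  define K where "K u v = (indicator {..pi/2} (u + v) :: real)" for u v
  define F where "F u v = K u v * f u * g v" for u v
  have m1: "(\<lambda>p. f (fst p)) \<in> borel_measurable (I \<Otimes>\<^sub>M I)" by (rule measurable_fst''[OF fm])
  have m2: "(\<lambda>p. g (snd p)) \<in> borel_measurable (I \<Otimes>\<^sub>M I)" by (rule measurable_snd''[OF gm])
  have i1: "(\<lambda>p. fst p :: real) \<in> borel_measurable (I \<Otimes>\<^sub>M I)" using measurable_fst''[OF id_meas_I, of I] by simp
  have i2: "(\<lambda>p. snd p :: real) \<in> borel_measurable (I \<Otimes>\<^sub>M I)" using measurable_snd''[OF id_meas_I, of I] by simp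
  have s12: "(\<lambda>p. fst p + snd p :: real) \<in> borel_measurable (I \<Otimes>\<^sub>M I)" using i1 i2 by (rule borel_measurable_add)
  have ind: "(indicator {..pi/2} :: real \<Rightarrow> real) \<in> borel_measurable borel" by (rule borel_measurable_indicator) simp
  have Km: "(\<lambda>p. K (fst p) (snd p)) \<in> borel_measurable (I \<Otimes>\<^sub>M I)"
  proof -
    have "(\<lambda>p. indicator {..pi/2} (fst p + snd p) :: real) \<in> borel_measurable (I \<Otimes>\<^sub>M I)"
      using measurable_compose[OF s12 ind] by simp
    then show ?thesis by (simp add: K_def)
  qed
  have Fm: "(case_prod F) \<in> borel_measurable (I \<Otimes>\<^sub>M I)"
  proof -
    have "(\<lambda>p. K (fst p) (snd p) * f (fst p) * g (snd p)) \<in> borel_measurable (I \<Otimes>\<^sub>M I)"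
      using Km m1 m2 by (intro borel_measurable_times)
    then show ?thesis by (simp add: F_def case_prod_beta')
  qed
  have Gint: "integrable (I \<Otimes>\<^sub>M I) (\<lambda>p. \<bar>f (fst p)\<bar> * \<bar>g (snd p)\<bar>)"
  proof (rule PP.Fubini_integrable)
    show "(\<lambda>p. \<bar>f (fst p)\<bar> * \<bar>g (snd p)\<bar>) \<in> borel_measurable (I \<Otimes>\<^sub>M I)"
      using m1 m2 by (intro borel_measurable_times borel_measurable_abs)
    have "integrable I (\<lambda>x. \<bar>f x\<bar> * (\<integral>y. \<bar>g y\<bar> \<partial>I))"
      using L2_integrable[OF assms(1)] by (intro integrable_mult_left integrable_abs)
    then show "integrable I (\<lambda>x. \<integral>y. norm (\<bar>f (fst (x, y))\<bar> * \<bar>g (snd (x, y))\<bar>) \<partial>I)"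
      by (simp add: abs_mult)
    show "AE x in I. integrable I (\<lambda>y. \<bar>f (fst (x, y))\<bar> * \<bar>g (snd (x, y))\<bar>)"
      using L2_integrable[OF assms(2)] by (intro AE_I2) (simp add: integrable_mult_right integrable_abs)
  qed
  have Fint: "integrable (I \<Otimes>\<^sub>M I) (case_prod F)"
  proof (rule Bochner_Integration.integrable_bound[OF Gint Fm])
    show "AE p in I \<Otimes>\<^sub>M I. norm (case_prod F p) \<le> norm (\<bar>f (fst p)\<bar> * \<bar>g (snd p)\<bar>)"
      by (intro AE_I2) (auto simp: F_def K_def abs_mult case_prod_beta' indicator_def)
  qed
  have Kind1: "indicator {0..pi/2-v} u = K u v" if "u \<in> JJ" "v \<in> JJ" for u v
    using that by (auto simp: K_def indicator_def)
  have Kind2: "indicator {0..pi/2-u} v = K u v" if "u \<in> JJ" "v \<in> JJ" for u v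
    using that by (auto simp: K_def indicator_def)
  have "inner_L2 (Top f) g = (\<integral>v. (\<integral>u. F u v \<partial>I) \<partial>I)"
    unfolding inner_L2_def
  proof (rule Bochner_Integration.integral_cong[OF refl])
    fix v assume v: "v \<in> space I"
    have vJ: "v \<in> JJ" using v by simp
    have "Top f v = (\<integral>u. K u v * f u \<partial>I)"
      unfolding Top_I[OF vJ]
      by (rule Bochner_Integration.integral_cong[OF refl]) (use v Kind1 in auto)
    then show "Top f v * g v = (\<integral>u. F u v \<partial>I)"
      by (simp add: F_def)
  qed
  also have "\<dots> = (\<integral>u. (\<integral>v. F u v \<partial>I) \<partial>I)"
    by (rule PP.Fubini_integral[OF Fint])
  also have "\<dots> = inner_L2 f (Top g)"
    unfolding inner_L2_def
  proof (rule Bochner_Integration.integral_cong[OF refl])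
    fix u assume u: "u \<in> space I"
    have uJ: "u \<in> JJ" using u by simp
    have "Top g u = (\<integral>v. K u v * g v \<partial>I)"
      unfolding Top_I[OF uJ]
      by (rule Bochner_Integration.integral_cong[OF refl]) (use u Kind2 in auto)
    then show "(\<integral>v. F u v \<partial>I) = f u * Top g u"
      by (simp add: F_def algebra_simps)
  qed
  finally show ?thesis .
qed

lemma cont_ae_zero: assumes gc: "continuous_on JJ g" and ae: "ae_eq g (\<lambda>x. 0)" shows "\<forall>x\<in>JJ. g x = 0"
proof -
  have gm: "g \<in> borel_measurable I" by (rule L2D(1)[OF cont_L2[OF gc]])
  have "(\<integral>x. (g x)\<^sup>2 \<partial>I) = (\<integral>x. 0 \<partial>I)"
  proof (rule integral_cong_AE)
    show "(\<lambda>x. (g x)\<^sup>2) \<in> borel_measurable I" using gm by simp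
    show "(\<lambda>x. 0::real) \<in> borel_measurable I" by simp
    show "AE x in I. (g x)\<^sup>2 = 0" using ae unfolding ae_eq_def by eventually_elim simp
  qed
  then have "integral\<^sup>L (lebesgue_on {0..pi/2}) (\<lambda>x. (g x)\<^sup>2) = 0" by simp
  moreover have "continuous_on {0..pi/2} (\<lambda>x. (g x)\<^sup>2)" using gc by (intro continuous_intros)
  ultimately have "\<forall>x\<in>{0..pi/2}. (g x)\<^sup>2 = 0"
    using integralL_eq_0_iff[of 0 "pi/2" "\<lambda>x. (g x)\<^sup>2"] by simp
  then show ?thesis by simp
qed

lemma INJ:
  fixes f :: "real \<Rightarrow> real"
  assumes fL: "f \<in> L2" and H: "\<And>x. x \<in> JJ \<Longrightarrow> (LINT u:{0..x}|lebesgue. f u) = 0"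
  shows "ae_eq f (\<lambda>x. 0)"
proof -
  define F where "F x = indicator JJ x * f x" for x
  have Fint: "integrable lebesgue F"
    using L2_integrable[OF fL] integrable_restrict_space[of JJ lebesgue f] by (simp add: F_def[abs_def])
  have Fm: "F \<in> borel_measurable lebesgue" using Fint by (rule borel_measurable_integrable)
  obtain g where gm: "g \<in> borel_measurable lborel" and Fg: "AE x in lborel. F x = g x"
    using completion_ex_borel_measurable_real[of F lborel] Fm by auto
  have gmL: "g \<in> borel_measurable lebesgue" using gm by (rule measurable_completion)
  have FgL: "AE x in lebesgue. F x = g x" using Fg by (rule AE_completion)
  have gintL: "integrable lebesgue g" using Fint integrable_cong_AE[OF Fm gmL FgL] by simp
  have gint: "integrable lborel g" using gintL integrable_completion[OF gm] by simp
  have sb: "sets (borel::real measure) = sigma_sets UNIV (range (\<lambda>a. {..a::real}))"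
    by (subst borel_eq_atMost) (rule sets_measure_of, simp)
  have stab: "Int_stable (range (\<lambda>a. {..a::real}))"
    unfolding Int_stable_def
  proof (intro ballI)
    fix X Y assume "X \<in> range (\<lambda>a. {..a::real})" "Y \<in> range (\<lambda>a. {..a::real})"
    then obtain a b where "X = {..a}" "Y = {..b}" by auto
    then show "X \<inter> Y \<in> range (\<lambda>a. {..a::real})" by (intro image_eqI[of _ _ "min a b"]) auto
  qed
  have clos: "range (\<lambda>a. {..a::real}) \<subseteq> Pow UNIV" by simp
  have intF: "(\<integral>x. F x \<partial>lebesgue) = 0"
  proof -
    have "(\<integral>x. F x \<partial>lebesgue) = (LINT u:{0..pi/2}|lebesgue. f u)"
      unfolding set_lebesgue_integral_def F_def by simp
    also have "\<dots> = 0" by (rule H) simp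
    finally show ?thesis .
  qed
  have P: "set_lebesgue_integral lebesgue A F = 0" if A: "A \<in> sets borel" for A
  proof -
    have As: "A \<in> sigma_sets UNIV (range (\<lambda>a. {..a::real}))" using A sb by simp
    show ?thesis
    proof (rule sigma_sets_induct_disjoint[OF stab clos As])
      fix B assume "B \<in> range (\<lambda>a. {..a::real})"
      then obtain a where B: "B = {..a}" by auto
      show "set_lebesgue_integral lebesgue B F = 0"
      proof (cases "a < 0")
        case True
        have "(\<lambda>x. indicator B x *\<^sub>R F x) = (\<lambda>x. 0)"
          using True by (auto simp: B F_def indicator_def)
        then show ?thesis unfolding set_lebesgue_integral_def by simp
      next
        case False
        define x where "x = min a (pi/2)"
        have xJ: "x \<in> JJ" using False by (auto simp: x_def)
        have "(\<lambda>u. indicator B u *\<^sub>R F u) = (\<lambda>u. indicator {0..x} u *\<^sub>R f u)"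
          using False by (auto simp: B F_def indicator_def x_def)
        then have "set_lebesgue_integral lebesgue B F = (LINT u:{0..x}|lebesgue. f u)"
          unfolding set_lebesgue_integral_def by simp
        then show ?thesis using H[OF xJ] by simp
      qed
    next
      show "set_lebesgue_integral lebesgue {} F = 0" unfolding set_lebesgue_integral_def by simp
    next
      fix B assume Bs: "B \<in> sigma_sets UNIV (range (\<lambda>a. {..a::real}))"
        and PB: "set_lebesgue_integral lebesgue B F = 0"
      have "B \<in> sets borel" using Bs sb by simp
      then have BL: "B \<in> sets lebesgue" by simp
      have iB: "integrable lebesgue (\<lambda>x. indicator B x *\<^sub>R F x)"
        by (rule integrable_mult_indicator[OF BL Fint])
      have "(\<lambda>x. indicator (UNIV - B) x *\<^sub>R F x) = (\<lambda>x. F x - indicator B x *\<^sub>R F x)"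
        by (auto simp: indicator_def)
      then have "set_lebesgue_integral lebesgue (UNIV - B) F = (\<integral>x. F x \<partial>lebesgue) - set_lebesgue_integral lebesgue B F"
        unfolding set_lebesgue_integral_def using Fint iB by simp
      then show "set_lebesgue_integral lebesgue (UNIV - B) F = 0" using PB intF by simp
    next
      fix B :: "nat \<Rightarrow> real set"
      assume disj: "disjoint_family B" and Bs: "range B \<subseteq> sigma_sets UNIV (range (\<lambda>a. {..a::real}))"
        and PB: "\<And>i. set_lebesgue_integral lebesgue (B i) F = 0"
      have BL: "B i \<in> sets lebesgue" for i
      proof -
        have "B i \<in> sets borel" using Bs sb by auto
        then show ?thesis by simp
      qed
      have UL: "(\<Union>i. B i) \<in> sets lebesgue" using BL by auto
      have si: "set_integrable lebesgue (\<Union>i. B i) F"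
        unfolding set_integrable_def by (rule integrable_mult_indicator[OF UL Fint])
      have "(LINT x:(\<Union>i. B i)|lebesgue. F x) = (\<Sum>i. (LINT x:(B i)|lebesgue. F x))"
        by (rule lebesgue_integral_countable_add[OF BL _ si]) (use disj in \<open>auto simp: disjoint_family_on_def\<close>)
      then show "set_lebesgue_integral lebesgue (\<Union>i. B i) F = 0" using PB by simp
    qed
  qed
  have "AE x in lborel. g x = 0"
  proof (rule sigma_finite_measure.density_zero[OF sigma_finite_lborel gint])
    fix A :: "real set" assume "A \<in> sets lborel"
    then have A: "A \<in> sets borel" by simp
    then have AL: "A \<in> sets lebesgue" by simp
    have m1: "(\<lambda>x. indicator A x *\<^sub>R g x) \<in> borel_measurable lborel" using A gm by simp
    have "set_lebesgue_integral lborel A g = set_lebesgue_integral lebesgue A g"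
      unfolding set_lebesgue_integral_def by (rule integral_completion[OF m1, symmetric])
    also have "\<dots> = set_lebesgue_integral lebesgue A F"
      unfolding set_lebesgue_integral_def
    proof (rule integral_cong_AE)
      show "(\<lambda>x. indicator A x *\<^sub>R g x) \<in> borel_measurable lebesgue" using AL gmL by simp
      show "(\<lambda>x. indicator A x *\<^sub>R F x) \<in> borel_measurable lebesgue" using AL Fm by simp
      show "AE x in lebesgue. indicator A x *\<^sub>R g x = indicator A x *\<^sub>R F x"
        using FgL by eventually_elim simp
    qed
    also have "\<dots> = 0" by (rule P[OF A])
    finally show "set_lebesgue_integral lborel A g = 0" .
  qed
  then have "AE x in lebesgue. g x = 0" by (rule AE_completion)
  then have "AE x in lebesgue. x \<in> JJ \<longrightarrow> f x = 0"
    using FgL by eventually_elim (auto simp: F_def)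
  then show ?thesis unfolding ae_eq_def using AE_restrict_space_iff[of JJ lebesgue] by simp
qed

lemma AA:
  fixes G :: "nat \<Rightarrow> real \<Rightarrow> real" and a b M :: real
  assumes bnd: "\<And>k x. x \<in> {a..b} \<Longrightarrow> \<bar>G k x\<bar> \<le> M"
    and equi: "\<And>e. e > 0 \<Longrightarrow> \<exists>d>0. \<forall>k x y. x \<in> {a..b} \<longrightarrow> y \<in> {a..b} \<longrightarrow> \<bar>x - y\<bar> < d \<longrightarrow> \<bar>G k x - G k y\<bar> < e"
  shows "\<exists>r. strict_mono r \<and> uniformly_Cauchy_on {a..b} (\<lambda>k. G (r k))"
proof (cases "a \<le> b")
  case False
  then have "{a..b} = {}" by auto
  then have "uniformly_Cauchy_on {a..b} (\<lambda>k. G (id k))" by (simp add: uniformly_Cauchy_on_def)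
  moreover have "strict_mono (id :: nat \<Rightarrow> nat)" by (simp add: strict_mono_def)
  ultimately show ?thesis by blast
next
  case ab: True
  obtain m :: "real \<Rightarrow> nat" where "bij_betw m \<rat> UNIV"
    using countable_rat Rats_infinite by (erule countableE_infinite)
  then obtain rq :: "nat \<Rightarrow> real" where bij: "bij_betw rq UNIV \<rat>"
    using bij_betw_inv by blast
  have dense_r: "\<And>x y. x < y \<Longrightarrow> \<exists>n. x < rq n \<and> rq n < y"
    by (metis Rats_dense_in_real bij f_the_inv_into_f bij_betw_def)
  define p where "p n = max a (min b (rq n))" for n
  have pab: "p n \<in> {a..b}" for n using ab by (auto simp: p_def)
  have pdense: "\<exists>n. \<bar>x - p n\<bar> < d" if x: "x \<in> {a..b}" and d: "d > 0" for x d
  proof (cases "a < b")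
    case False
    then have "x = a" "b = a" using x by auto
    then show ?thesis using d by (auto simp: p_def)
  next
    case True
    have "max a (x - d) < min b (x + d)" using True x d by auto
    then obtain n where n: "max a (x - d) < rq n" "rq n < min b (x + d)" using dense_r by blast
    then have "p n = rq n" by (auto simp: p_def)
    then show ?thesis using n by (intro exI[of _ n]) auto
  qed
  let ?P = "\<lambda>n. \<lambda>s. convergent (\<lambda>k. G (s k) (p n))"
  interpret nat: subseqs ?P
  proof (unfold convergent_def, unfold subseqs_def, auto)
    fix n :: nat and s :: "nat \<Rightarrow> nat" assume s: "strict_mono s"
    have "(\<lambda>k. G (s k) (p n)) k \<in> {-M..M}" for k
      using bnd[OF pab, of "s k" n] by (auto simp: abs_le_iff)
    then have "\<exists>l s'. strict_mono s' \<and> ((\<lambda>k. G (s k) (p n)) \<circ> s') \<longlonglongrightarrow> l"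
      using compact_Icc compact_imp_seq_compact seq_compactE by metis
    thus "\<exists>s'. strict_mono (s'::nat\<Rightarrow>nat) \<and> (\<exists>l. (\<lambda>k. G (s (s' k)) (p n)) \<longlonglongrightarrow> l)"
      by (auto simp: comp_def)
  qed
  define d where "d = nat.diagseq"
  have subseq: "strict_mono d"
    unfolding d_def using nat.subseq_diagseq by auto
  have rat_cnv: "?P n d" for n
  proof -
    have Pn_seqseq: "?P n (nat.seqseq (Suc n))"
      by (rule nat.seqseq_holds)
    have 1: "(\<lambda>k. G ((nat.seqseq (Suc n) \<circ> (\<lambda>k. nat.fold_reduce (Suc n) k
      (Suc n + k))) k) (p n)) = (\<lambda>k. G (nat.seqseq (Suc n) k) (p n)) \<circ>
      (\<lambda>k. nat.fold_reduce (Suc n) k (Suc n + k))"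
      by auto
    have 2: "?P n (d \<circ> ((+) (Suc n)))"
      unfolding d_def nat.diagseq_seqseq 1
      by (intro convergent_subseq_convergent Pn_seqseq nat.subseq_diagonal_rest)
    then obtain L where 3: "(\<lambda>na. G (d (na + Suc n)) (p n)) \<longlonglongrightarrow> L"
      by (auto simp: add.commute dest: convergentD)
    then have "(\<lambda>k. G (d k) (p n)) \<longlonglongrightarrow> L"
      by (rule LIMSEQ_offset)
    then show ?thesis
      by (auto simp: convergent_def)
  qed
  have "uniformly_Cauchy_on {a..b} (\<lambda>k. G (d k))"
  proof (rule uniformly_Cauchy_onI)
    fix e :: real assume e: "e > 0"
    then obtain del where del: "del > 0"
      and dl: "\<And>k x y. x \<in> {a..b} \<Longrightarrow> y \<in> {a..b} \<Longrightarrow> \<bar>x - y\<bar> < del \<Longrightarrow> \<bar>G k x - G k y\<bar> < e/3"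
      using equi[of "e/3"] by auto
    have cov: "{a..b} \<subseteq> (\<Union>n\<in>UNIV. ball (p n) del)"
    proof
      fix x assume "x \<in> {a..b}"
      then obtain n where "\<bar>x - p n\<bar> < del" using pdense del by blast
      then have "x \<in> ball (p n) del" by (simp add: dist_real_def abs_minus_commute)
      then show "x \<in> (\<Union>n\<in>UNIV. ball (p n) del)" by blast
    qed
    obtain C where C: "finite C" "{a..b} \<subseteq> (\<Union>n\<in>C. ball (p n) del)"
      by (rule compactE_image[OF compact_Icc _ cov]) auto
    have ex: "\<forall>n. \<exists>N. \<forall>k\<ge>N. \<forall>l\<ge>N. \<bar>G (d k) (p n) - G (d l) (p n)\<bar> < e/3"
    proof
      fix n
      have "Cauchy (\<lambda>k. G (d k) (p n))" by (rule convergent_Cauchy[OF rat_cnv])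
      then show "\<exists>N. \<forall>k\<ge>N. \<forall>l\<ge>N. \<bar>G (d k) (p n) - G (d l) (p n)\<bar> < e/3"
        using CauchyD[of "\<lambda>k. G (d k) (p n)" "e/3"] e by auto
    qed
    obtain NN where NN0: "\<forall>n. \<forall>k\<ge>NN n. \<forall>l\<ge>NN n. \<bar>G (d k) (p n) - G (d l) (p n)\<bar> < e/3"
      using choice[OF ex] by blast
    have NN: "\<bar>G (d k) (p n) - G (d l) (p n)\<bar> < e/3" if "k \<ge> NN n" "l \<ge> NN n" for n k l
      using NN0 that by blast
    define N where "N = (\<Sum>n\<in>C. NN n)"
    have NNle: "NN n \<le> N" if "n \<in> C" for n
      unfolding N_def by (rule member_le_sum[OF that _ C(1)]) simp
    show "\<exists>N. \<forall>x\<in>{a..b}. \<forall>k\<ge>N. \<forall>l\<ge>N. dist (G (d k) x) (G (d l) x) < e"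
    proof (intro exI[of _ N] ballI allI impI)
      fix x k l assume x: "x \<in> {a..b}" and k: "N \<le> k" and l: "N \<le> l"
      obtain n where n: "n \<in> C" "x \<in> ball (p n) del" using C(2) x by auto
      have xp: "\<bar>x - p n\<bar> < del" using n(2) by (simp add: dist_real_def abs_minus_commute)
      have t1: "\<bar>G (d k) x - G (d k) (p n)\<bar> < e/3" by (rule dl[OF x pab xp])
      have t2: "\<bar>G (d l) x - G (d l) (p n)\<bar> < e/3" by (rule dl[OF x pab xp])
      have t3: "\<bar>G (d k) (p n) - G (d l) (p n)\<bar> < e/3"
        using NN[of n k l] NNle[OF n(1)] k l by auto
      have "\<bar>G (d k) x - G (d l) x\<bar> < e" using t1 t2 t3 by linarith
      then show "dist (G (d k) x) (G (d l) x) < e" by (simp add: dist_real_def)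
    qed
  qed
  then show ?thesis using subseq by blast
qed

lemma Tn_L2: "f \<in> L2 \<Longrightarrow> (Top ^^ k) f \<in> L2"
  by (induction k) (simp_all add: Top_L2)

lemma Tn_ae: assumes "f \<in> L2" "g \<in> L2" "ae_eq f g" shows "ae_eq ((Top ^^ k) f) ((Top ^^ k) g)"
proof (induction k)
  case 0 then show ?case using assms(3) by simp
next
  case (Suc k)
  have "\<And>v. v \<in> JJ \<Longrightarrow> Top ((Top ^^ k) f) v = Top ((Top ^^ k) g) v"
    by (rule Top_ae[OF Tn_L2[OF assms(1)] Tn_L2[OF assms(2)] Suc.IH])
  then have "ae_eq (Top ((Top ^^ k) f)) (Top ((Top ^^ k) g))" by (rule eqJ_ae)
  then show ?case by simp
qed

lemma Tn_lin: assumes "f \<in> L2" "g \<in> L2"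
  shows "ae_eq ((Top ^^ k) (\<lambda>x. a * f x + b * g x)) (\<lambda>x. a * (Top ^^ k) f x + b * (Top ^^ k) g x)"
proof (induction k)
  case 0 then show ?case by (simp add: ae_refl)
next
  case (Suc k)
  have L1: "(Top ^^ k) (\<lambda>x. a * f x + b * g x) \<in> L2" by (rule Tn_L2[OF L2_lin[OF assms]])
  have L2': "(\<lambda>x. a * (Top ^^ k) f x + b * (Top ^^ k) g x) \<in> L2"
    by (rule L2_lin[OF Tn_L2[OF assms(1)] Tn_L2[OF assms(2)]])
  have "Top ((Top ^^ k) (\<lambda>x. a * f x + b * g x)) v = a * Top ((Top ^^ k) f) v + b * Top ((Top ^^ k) g) v"
    if v: "v \<in> JJ" for v
  proof -
    have "Top ((Top ^^ k) (\<lambda>x. a * f x + b * g x)) v = Top (\<lambda>x. a * (Top ^^ k) f x + b * (Top ^^ k) g x) v"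
      by (rule Top_ae[OF L1 L2' Suc.IH v])
    also have "\<dots> = a * Top ((Top ^^ k) f) v + b * Top ((Top ^^ k) g) v"
      by (rule Top_lin[OF Tn_L2[OF assms(1)] Tn_L2[OF assms(2)] v])
    finally show ?thesis .
  qed
  then have "ae_eq (Top ((Top ^^ k) (\<lambda>x. a * f x + b * g x))) (\<lambda>x. a * Top ((Top ^^ k) f) x + b * Top ((Top ^^ k) g) x)"
    by (rule eqJ_ae)
  then show ?case by simp
qed

lemma Tn_selfadj: assumes "f \<in> L2" "g \<in> L2" shows "inner_L2 ((Top ^^ k) f) g = inner_L2 f ((Top ^^ k) g)"
  using assms
proof (induction k arbitrary: g)
  case 0 then show ?case by simp
next
  case (Suc k)
  have "inner_L2 ((Top ^^ Suc k) f) g = inner_L2 (Top ((Top ^^ k) f)) g" by simp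
  also have "\<dots> = inner_L2 ((Top ^^ k) f) (Top g)"
    by (rule Top_selfadj[OF Tn_L2[OF Suc.prems(1)] Suc.prems(2)])
  also have "\<dots> = inner_L2 f ((Top ^^ k) (Top g))"
    by (rule Suc.IH[OF Suc.prems(1) Top_L2[OF Suc.prems(2)]])
  also have "(Top ^^ k) (Top g) = (Top ^^ Suc k) g" by (simp add: funpow_swap1)
  finally show ?case .
qed

lemma zero_L2: "(\<lambda>x. 0::real) \<in> L2" by (rule cont_L2) simp

lemma Top_zero: "v \<in> JJ \<Longrightarrow> Top (\<lambda>x. 0) v = 0"
  using Top_HK[OF zero_L2] by simp

lemma Tn_zero: "ae_eq ((Top ^^ k) (\<lambda>x. 0)) (\<lambda>x. 0)"
proof (induction k)
  case 0 then show ?case by (simp add: ae_refl)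
next
  case (Suc k)
  have "Top ((Top ^^ k) (\<lambda>x. 0)) v = 0" if v: "v \<in> JJ" for v
    using Top_ae[OF Tn_L2[OF zero_L2] zero_L2 Suc.IH v] Top_zero[OF v] by simp
  then have "ae_eq (Top ((Top ^^ k) (\<lambda>x. 0))) (\<lambda>x. 0)" by (rule eqJ_ae)
  then show ?case by simp
qed

lemma Top_unif: assumes "f \<in> L2" "g \<in> L2" "\<And>x. x \<in> JJ \<Longrightarrow> \<bar>f x - g x\<bar> \<le> e" "v \<in> JJ"
  shows "\<bar>Top f v - Top g v\<bar> \<le> 2 * e"
proof -
  have vv: "pi/2 - v \<in> JJ" using assms(4) by auto
  have e0: "0 \<le> e" using assms(3)[of 0] by simp
  have i1: "f integrable_on {0..pi/2-v}" by (rule HK_int[OF assms(1) vv])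
  have i2: "g integrable_on {0..pi/2-v}" by (rule HK_int[OF assms(2) vv])
  have "Top f v - Top g v = integral {0..pi/2-v} (\<lambda>x. f x - g x)"
    using Top_HK[OF assms(1,4)] Top_HK[OF assms(2,4)] integral_diff[OF i1 i2] by simp
  also have "norm \<dots> \<le> integral {0..pi/2-v} (\<lambda>x. e)"
  proof (rule integral_norm_bound_integral)
    show "(\<lambda>x. f x - g x) integrable_on {0..pi/2-v}" by (rule integrable_diff[OF i1 i2])
    show "(\<lambda>x. e) integrable_on {0..pi/2-v}" by (rule Henstock_Kurzweil_Integration.integrable_const_ivl)
    fix x assume "x \<in> {0..pi/2-v}"
    then have "x \<in> JJ" using assms(4) by auto
    then show "norm (f x - g x) \<le> e" using assms(3) by simp
  qed
  also have "\<dots> = (pi/2 - v) * e" using vv by simp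
  also have "\<dots> \<le> 2 * e"
  proof (rule mult_right_mono[OF _ e0])
    show "pi/2 - v \<le> 2" using pi_less_4 assms(4) by simp
  qed
  finally show ?thesis by simp
qed

lemma sq_L2_absint: assumes "f \<in> L2" "S \<subseteq> JJ" "S \<in> sets lebesgue"
  shows "(\<lambda>x. (f x)\<^sup>2) absolutely_integrable_on S"
  using set_integrable_subset[of lebesgue JJ "\<lambda>x. (f x)\<^sup>2" S] L2D(2)[OF assms(1)] assms(2,3)
  by (simp add: integrable_I_iff)

lemma int_bound:
  assumes fL: "f \<in> L2" and M: "(\<integral>x. (f x)\<^sup>2 \<partial>I) \<le> M" and cd: "0 \<le> c" "c \<le> d" "d \<le> pi/2" and t: "t > 0"
  shows "\<bar>integral {c..d} f\<bar> \<le> (t * M + (d - c) / t) / 2"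
proof -
  have sub: "{c..d} \<subseteq> JJ" using cd by auto
  have fi: "f integrable_on {c..d}"
    using set_lebesgue_integral_eq_integral(1)[OF L2_absint[OF fL sub]] by simp
  have f2i: "(\<lambda>x. (f x)\<^sup>2) integrable_on {c..d}"
    using set_lebesgue_integral_eq_integral(1)[OF sq_L2_absint[OF fL sub]] by simp
  have f2J: "(\<lambda>x. (f x)\<^sup>2) integrable_on JJ"
    using set_lebesgue_integral_eq_integral(1)[OF sq_L2_absint[OF fL order_refl]] by simp
  have gi: "(\<lambda>x. (t * (f x)\<^sup>2 + 1 / t) / 2) integrable_on {c..d}"
    using integrable_add[OF integrable_cmul[OF f2i, of t] Henstock_Kurzweil_Integration.integrable_const_ivl[of "1/t" c d]]
      integrable_cmul[of "\<lambda>x. t * (f x)\<^sup>2 + 1 / t" "{c..d}" "1/2"]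
    by (simp add: divide_simps)
  have "\<bar>integral {c..d} f\<bar> \<le> integral {c..d} (\<lambda>x. (t * (f x)\<^sup>2 + 1 / t) / 2)"
  proof -
    have "norm (integral {c..d} f) \<le> integral {c..d} (\<lambda>x. (t * (f x)\<^sup>2 + 1 / t) / 2)"
    proof (rule integral_norm_bound_integral[OF fi gi])
      fix x
      have "0 \<le> (t * \<bar>f x\<bar> - 1)\<^sup>2" by simp
      then have "2 * t * \<bar>f x\<bar> \<le> t * t * (f x)\<^sup>2 + 1"
        by (simp add: power2_eq_square algebra_simps abs_mult_self_eq)
      then have "2 * \<bar>f x\<bar> \<le> t * (f x)\<^sup>2 + 1 / t"
        using t by (simp add: field_simps)
      then show "norm (f x) \<le> (t * (f x)\<^sup>2 + 1 / t) / 2" by simp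
    qed
    then show ?thesis by simp
  qed
  also have "integral {c..d} (\<lambda>x. (t * (f x)\<^sup>2 + 1 / t) / 2) = (t * integral {c..d} (\<lambda>x. (f x)\<^sup>2) + (d - c) / t) / 2"
  proof -
    have "integral {c..d} (\<lambda>x. (t * (f x)\<^sup>2 + 1 / t) / 2) = integral {c..d} (\<lambda>x. (1/2) *\<^sub>R (t *\<^sub>R (f x)\<^sup>2 + 1 / t))"
      by (simp add: divide_simps)
    also have "\<dots> = (1/2) * (t * integral {c..d} (\<lambda>x. (f x)\<^sup>2) + (d - c) / t)"
      using integral_add[OF integrable_cmul[OF f2i, of t] Henstock_Kurzweil_Integration.integrable_const_ivl[of "1/t" c d]] cd
      by simp
    finally show ?thesis by simp
  qed
  also have "\<dots> \<le> (t * M + (d - c) / t) / 2"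
  proof -
    have "integral {c..d} (\<lambda>x. (f x)\<^sup>2) \<le> integral JJ (\<lambda>x. (f x)\<^sup>2)"
      by (rule integral_subset_le[OF sub f2i f2J]) simp
    also have "integral JJ (\<lambda>x. (f x)\<^sup>2) = (\<integral>x. (f x)\<^sup>2 \<partial>I)"
      by (rule lebesgue_integral_eq_integral[symmetric]) (use L2D(2)[OF fL] in simp_all)
    finally have "integral {c..d} (\<lambda>x. (f x)\<^sup>2) \<le> M" using M by simp
    then show ?thesis using t by (simp add: divide_right_mono)
  qed
  finally show ?thesis .
qed

lemma Top_equi:
  assumes fL: "f \<in> L2" and M: "(\<integral>x. (f x)\<^sup>2 \<partial>I) \<le> M" and v: "v \<in> JJ" "v' \<in> JJ" and t: "t > 0"
  shows "\<bar>Top f v - Top f v'\<bar> \<le> (t * M + \<bar>v - v'\<bar> / t) / 2"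
proof -
  have main: "\<bar>Top f a - Top f b\<bar> \<le> (t * M + (b - a) / t) / 2" if ab: "a \<in> JJ" "b \<in> JJ" "a \<le> b" for a b
  proof -
    have aa: "pi/2 - a \<in> JJ" using ab by auto
    have c1: "0 \<le> pi/2 - b" "pi/2 - b \<le> pi/2 - a" "pi/2 - a \<le> pi/2" using ab by auto
    have comb: "integral {0..pi/2-b} f + integral {pi/2-b..pi/2-a} f = integral {0..pi/2-a} f"
      by (rule Henstock_Kurzweil_Integration.integral_combine[OF c1(1) c1(2) HK_int[OF fL aa]])
    have ta: "Top f a = integral {0..pi/2-a} f" by (rule Top_HK[OF fL ab(1)])
    have tb: "Top f b = integral {0..pi/2-b} f" by (rule Top_HK[OF fL ab(2)])
    have diff: "Top f a - Top f b = integral {pi/2-b..pi/2-a} f" using comb ta tb by linarith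
    have bd: "\<bar>integral {pi/2-b..pi/2-a} f\<bar> \<le> (t * M + ((pi/2-a) - (pi/2-b)) / t) / 2"
      by (rule int_bound[OF fL M c1 t])
    have e: "(pi/2-a) - (pi/2-b) = b - a" by simp
    show ?thesis using diff bd unfolding e by simp
  qed
  show ?thesis
  proof (cases "v \<le> v'")
    case True
    have "\<bar>v - v'\<bar> = v' - v" using True by simp
    then show ?thesis using main[OF v True] by simp
  next
    case False
    then have vv: "v' \<le> v" by simp
    have "\<bar>v - v'\<bar> = v - v'" using vv by simp
    moreover have "\<bar>Top f v - Top f v'\<bar> = \<bar>Top f v' - Top f v\<bar>" by (rule abs_minus_commute)
    ultimately show ?thesis using main[OF v(2) v(1) vv] by simp
  qed
qed

lemma Top_bnd:
  assumes fL: "f \<in> L2" and M: "(\<integral>x. (f x)\<^sup>2 \<partial>I) \<le> M" and v: "v \<in> JJ"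
  shows "\<bar>Top f v\<bar> \<le> (M + 2) / 2"
proof -
  have c: "0 \<le> (0::real)" "0 \<le> pi/2 - v" "pi/2 - v \<le> pi/2" using v by auto
  have bd: "\<bar>integral {0..pi/2-v} f\<bar> \<le> (1 * M + ((pi/2-v) - 0) / 1) / 2"
    by (rule int_bound[OF fL M c zero_less_one])
  have bd2: "\<bar>integral {0..pi/2-v} f\<bar> \<le> (M + (pi/2-v)) / 2" using bd by simp
  have p: "pi/2 - v \<le> 2" using pi_less_4 v by simp
  have tv: "Top f v = integral {0..pi/2-v} f" by (rule Top_HK[OF fL v])
  have "(M + (pi/2-v)) / 2 \<le> (M + 2) / 2" using p by (intro divide_right_mono) auto
  with bd2 show ?thesis unfolding tv by (rule order_trans)
qed

lemma Tn_compact: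
  fixes F :: "nat \<Rightarrow> real \<Rightarrow> real"
  assumes n: "n \<ge> 1" and FL: "\<And>k. F k \<in> L2" and Fb: "bounded (range (\<lambda>k. norm_L2 (F k)))"
  shows "\<exists>r g. strict_mono r \<and> g \<in> L2 \<and> (\<lambda>k. norm_L2 (\<lambda>x. (Top ^^ n) (F (r k)) x - g x)) \<longlonglongrightarrow> 0"
proof -
  obtain B where B: "\<And>k. \<bar>norm_L2 (F k)\<bar> \<le> B" using Fb unfolding bounded_real by auto
  define M where "M = B\<^sup>2"
  have M0: "0 \<le> M" by (simp add: M_def)
  have FM: "(\<integral>x. (F k x)\<^sup>2 \<partial>I) \<le> M" for k
  proof -
    have i: "(\<integral>x. (F k x)\<^sup>2 \<partial>I) = inner_L2 (F k) (F k)" by (simp add: inner_L2_def power2_eq_square)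
    have "inner_L2 (F k) (F k) = (norm_L2 (F k))\<^sup>2"
      using inner_self_nonneg[of "F k"] by (simp add: norm_L2_def)
    also have "\<dots> = \<bar>norm_L2 (F k)\<bar>\<^sup>2" by simp
    also have "\<dots> \<le> B\<^sup>2" by (rule power_mono[OF B]) simp
    finally show ?thesis using i by (simp add: M_def)
  qed
  define G where "G k = Top (F k)" for k
  have GL: "G k \<in> L2" for k unfolding G_def by (rule Top_L2[OF FL])
  have bnd: "\<bar>G k x\<bar> \<le> (M + 2) / 2" if "x \<in> {0..pi/2}" for k x
    unfolding G_def by (rule Top_bnd[OF FL FM that])
  have equi: "\<exists>d>0. \<forall>k x y. x \<in> {0..pi/2} \<longrightarrow> y \<in> {0..pi/2} \<longrightarrow> \<bar>x - y\<bar> < d \<longrightarrow> \<bar>G k x - G k y\<bar> < e"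
    if e: "e > 0" for e
  proof -
    define t where "t = e / (M + 1)"
    have t0: "t > 0" using e M0 by (simp add: t_def)
    have tM: "t * M < e" using e M0 by (simp add: t_def field_simps)
    show ?thesis
    proof (intro exI[of _ "e * t"] conjI allI impI)
      show "e * t > 0" using e t0 by simp
      fix k x y assume x: "x \<in> {0..pi/2}" and y: "y \<in> {0..pi/2}" and xy: "\<bar>x - y\<bar> < e * t"
      have "\<bar>x - y\<bar> / t < e" using xy t0 by (simp add: divide_less_eq)
      then have "(t * M + \<bar>x - y\<bar> / t) / 2 < e" using tM by simp
      moreover have "\<bar>G k x - G k y\<bar> \<le> (t * M + \<bar>x - y\<bar> / t) / 2"
        unfolding G_def by (rule Top_equi[OF FL FM x y t0])
      ultimately show "\<bar>G k x - G k y\<bar> < e" by simp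
    qed
  qed
  obtain r where r: "strict_mono r" and rC: "uniformly_Cauchy_on {0..pi/2} (\<lambda>k. G (r k))"
    using AA[of 0 "pi/2" G "(M+2)/2", OF bnd equi] by blast
  obtain U where U: "uniform_limit {0..pi/2} (\<lambda>k. G (r k)) U sequentially"
    using Cauchy_uniformly_convergent[OF rC] unfolding uniformly_convergent_on_def by blast
  have Uc: "continuous_on JJ U"
  proof (rule uniform_limit_theorem[OF _ U])
    show "\<forall>\<^sub>F k in sequentially. continuous_on JJ (G (r k))"
      by (intro always_eventually allI) (simp add: G_def Top_cont[OF FL])
  qed simp
  have UL: "U \<in> L2" by (rule cont_L2[OF Uc])
  obtain m where m: "n = Suc m" using n by (cases n) auto
  have conv: "\<exists>N. \<forall>k\<ge>N. \<forall>x\<in>JJ. \<bar>(Top ^^ j) (G (r k)) x - (Top ^^ j) U x\<bar> \<le> e" if "e > 0" for j e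
    using that
  proof (induction j arbitrary: e)
    case 0
    have "\<forall>\<^sub>F k in sequentially. \<forall>x\<in>JJ. dist (G (r k) x) (U x) < e"
      using U 0 unfolding uniform_limit_iff by blast
    then obtain N where "\<forall>k\<ge>N. \<forall>x\<in>JJ. dist (G (r k) x) (U x) < e"
      unfolding eventually_sequentially by blast
    then show ?case by (intro exI[of _ N]) (auto simp: dist_real_def less_imp_le)
  next
    case (Suc j)
    have e2: "e/2 > 0" using Suc.prems by simp
    obtain N where N0: "\<forall>k\<ge>N. \<forall>x\<in>JJ. \<bar>(Top ^^ j) (G (r k)) x - (Top ^^ j) U x\<bar> \<le> e/2"
      using Suc.IH[OF e2] by blast
    have N: "\<bar>(Top ^^ j) (G (r k)) x - (Top ^^ j) U x\<bar> \<le> e/2" if "k \<ge> N" "x \<in> JJ" for k x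
      using N0 that by blast
    show ?case
    proof (intro exI[of _ N] allI impI ballI)
      fix k x assume k: "N \<le> k" and x: "x \<in> JJ"
      have "\<bar>Top ((Top ^^ j) (G (r k))) x - Top ((Top ^^ j) U) x\<bar> \<le> 2 * (e/2)"
        by (rule Top_unif[OF Tn_L2[OF GL] Tn_L2[OF UL] N[OF k] x])
      then show "\<bar>(Top ^^ Suc j) (G (r k)) x - (Top ^^ Suc j) U x\<bar> \<le> e" by simp
    qed
  qed
  define g where "g = (Top ^^ m) U"
  have gL: "g \<in> L2" unfolding g_def by (rule Tn_L2[OF UL])
  have key: "(Top ^^ n) (F k) = (Top ^^ m) (G k)" for k
    by (simp only: m funpow_Suc_right o_apply G_def)
  define C where "C = measure I (space I)"
  have C0: "0 \<le> C" by (simp add: C_def)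
  have lim: "(\<lambda>k. norm_L2 (\<lambda>x. (Top ^^ n) (F (r k)) x - g x)) \<longlonglongrightarrow> 0"
  proof (rule LIMSEQ_I)
    fix r0 :: real assume r0: "r0 > 0"
    define e where "e = r0 / (sqrt C + 1)"
    have sC: "sqrt C + 1 > 0" using C0 by (simp add: add_nonneg_pos)
    have e0: "e > 0" unfolding e_def using r0 sC by (rule divide_pos_pos)
    have esC: "e * sqrt C < r0" using r0 sC by (simp add: e_def field_simps)
    obtain N where N0: "\<forall>k\<ge>N. \<forall>x\<in>JJ. \<bar>(Top ^^ m) (G (r k)) x - (Top ^^ m) U x\<bar> \<le> e"
      using conv[OF e0, of m] by blast
    have N: "\<bar>(Top ^^ m) (G (r k)) x - (Top ^^ m) U x\<bar> \<le> e" if "k \<ge> N" "x \<in> JJ" for k x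
      using N0 that by blast
    show "\<exists>no. \<forall>k\<ge>no. norm (norm_L2 (\<lambda>x. (Top ^^ n) (F (r k)) x - g x) - 0) < r0"
    proof (intro exI[of _ N] allI impI)
      fix k assume k: "N \<le> k"
      define D where "D x = (Top ^^ n) (F (r k)) x - g x" for x
      have DL: "D \<in> L2"
      proof -
        have "(\<lambda>x. 1 * (Top ^^ n) (F (r k)) x + (-1) * g x) \<in> L2"
          by (rule L2_lin[OF Tn_L2[OF FL] gL])
        then show ?thesis by (simp add: D_def[abs_def])
      qed
      have Db: "\<bar>D x\<bar> \<le> e" if "x \<in> JJ" for x
        using N[OF k that] by (simp add: D_def key g_def)
      have "inner_L2 D D \<le> (\<integral>x. e * e \<partial>I)"
        unfolding inner_L2_def
      proof (rule integral_mono)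
        show "integrable I (\<lambda>x. D x * D x)" by (rule L2_mult_integrable[OF DL DL])
        show "integrable I (\<lambda>x. e * e)" by simp
        fix x assume "x \<in> space I"
        then have "\<bar>D x\<bar> \<le> e" using Db by simp
        then have "\<bar>D x\<bar> * \<bar>D x\<bar> \<le> e * e" by (intro mult_mono) auto
        then show "D x * D x \<le> e * e" by (simp add: abs_mult_self_eq)
      qed
      also have "\<dots> = C * (e * e)" by (simp add: C_def)
      finally have "sqrt (inner_L2 D D) \<le> sqrt (C * (e * e))" by (rule real_sqrt_le_mono)
      also have "sqrt (C * (e * e)) = e * sqrt C" using e0 by (simp add: real_sqrt_mult)
      finally have "norm_L2 D < r0" using esC by (simp add: norm_L2_def)
      moreover have "0 \<le> norm_L2 D" using inner_self_nonneg[of D] by (simp add: norm_L2_def)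
      ultimately show "norm (norm_L2 (\<lambda>x. (Top ^^ n) (F (r k)) x - g x) - 0) < r0"
        by (simp add: D_def[abs_def])
    qed
  qed
  show ?thesis using r gL lim by blast
qed

lemma L2_scale: "f \<in> L2 \<Longrightarrow> (\<lambda>x. a * f x) \<in> L2"
  using L2_lin[of f f a 0] by simp

lemma Top_scale: assumes "f \<in> L2" "v \<in> JJ" shows "Top (\<lambda>x. a * f x) v = a * Top f v"
  using Top_lin[OF assms(1) assms(1) assms(2), of a 0] by simp

lemma ae_scale: assumes "ae_eq f g" shows "ae_eq (\<lambda>x. a * f x) (\<lambda>x. a * g x)"
  using assms unfolding ae_eq_def by eventually_elim simp

lemma Tn_scale: assumes "f \<in> L2" shows "ae_eq ((Top ^^ k) (\<lambda>x. a * f x)) (\<lambda>x. a * (Top ^^ k) f x)"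
  using Tn_lin[OF assms assms, of k a 0] by simp

lemma Tn_eig: assumes fL: "f \<in> L2" and e: "ae_eq (Top f) (\<lambda>x. lam * f x)"
  shows "ae_eq ((Top ^^ k) f) (\<lambda>x. lam ^ k * f x)"
proof (induction k)
  case 0 then show ?case by (simp add: ae_refl)
next
  case (Suc k)
  have "Top ((Top ^^ k) f) v = lam ^ k * Top f v" if v: "v \<in> JJ" for v
  proof -
    have "Top ((Top ^^ k) f) v = Top (\<lambda>x. lam ^ k * f x) v"
      by (rule Top_ae[OF Tn_L2[OF fL] L2_scale[OF fL] Suc.IH v])
    also have "\<dots> = lam ^ k * Top f v" by (rule Top_scale[OF fL v])
    finally show ?thesis .
  qed
  then have "ae_eq (Top ((Top ^^ k) f)) (\<lambda>x. lam ^ k * Top f x)" by (rule eqJ_ae)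
  moreover have "ae_eq (\<lambda>x. lam ^ k * Top f x) (\<lambda>x. lam ^ k * (lam * f x))" by (rule ae_scale[OF e])
  ultimately have "ae_eq (Top ((Top ^^ k) f)) (\<lambda>x. lam ^ k * (lam * f x))" by (rule ae_trans)
  then show ?case by (simp add: mult.assoc mult.commute mult.left_commute)
qed

lemma eig1:
  assumes fL: "f \<in> L2" and lam: "lam \<noteq> 0" and e: "ae_eq (Top f) (\<lambda>x. lam * f x)"
  shows "ae_eq f (\<lambda>x. 0) \<or> (\<exists>k::int. lam = 1 / (4 * of_int k + 1) \<and> (\<exists>A. ae_eq f (\<lambda>u. A * cos ((4 * of_int k + 1) * u))))"
proof -
  define g where "g x = (1 / lam) * Top f x" for x
  have gc: "continuous_on JJ g" unfolding g_def[abs_def] by (intro continuous_intros Top_cont[OF fL])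
  have TfL: "Top f \<in> L2" by (rule Top_L2[OF fL])
  have gf: "ae_eq g f"
  proof -
    have "ae_eq g (\<lambda>x. (1 / lam) * (lam * f x))" unfolding g_def by (rule ae_scale[OF e])
    then show ?thesis using lam by simp
  qed
  have geq: "Top g v = lam * g v" if v: "v \<in> JJ" for v
  proof -
    have "Top g v = (1 / lam) * Top (Top f) v" unfolding g_def by (rule Top_scale[OF TfL v])
    also have "Top (Top f) v = Top (\<lambda>x. lam * f x) v" by (rule Top_ae[OF TfL L2_scale[OF fL] e v])
    also have "\<dots> = lam * Top f v" by (rule Top_scale[OF fL v])
    finally show ?thesis using lam by (simp add: g_def[abs_def])
  qed
  have ode: "(\<forall>v\<in>JJ. g v = g 0 * cos (v / lam)) \<and> (g 0 \<noteq> 0 \<longrightarrow> (\<exists>k::int. 1 / lam = 4 * of_int k + 1))"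
    by (rule ode_eig[OF gc lam geq])
  show ?thesis
  proof (cases "g 0 = 0")
    case True
    have "g v = 0" if v: "v \<in> JJ" for v
    proof -
      have "g v = g 0 * cos (v / lam)" using ode v by blast
      then show ?thesis using True by simp
    qed
    then have "ae_eq g (\<lambda>x. 0)" by (rule eqJ_ae)
    then have "ae_eq f (\<lambda>x. 0)" by (rule ae_trans[OF ae_sym[OF gf]])
    then show ?thesis by simp
  next
    case False
    then obtain k :: int where k: "1 / lam = 4 * of_int k + 1" using ode by blast
    have lk: "lam = 1 / (4 * of_int k + 1)"
    proof -
      have "lam = 1 / (1 / lam)" by simp
      also note k
      finally show ?thesis .
    qed
    have "\<And>v. v \<in> JJ \<Longrightarrow> g v = g 0 * cos ((4 * of_int k + 1) * v)"
    proof -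
      fix v assume "v \<in> JJ"
      then have "g v = g 0 * cos (v / lam)" using ode by blast
      also have "v / lam = (4 * of_int k + 1) * v" using k by (simp add: divide_inverse mult.commute)
      finally show "g v = g 0 * cos ((4 * of_int k + 1) * v)" .
    qed
    then have "ae_eq g (\<lambda>u. g 0 * cos ((4 * of_int k + 1) * u))" by (rule eqJ_ae)
    then have "ae_eq f (\<lambda>u. g 0 * cos ((4 * of_int k + 1) * u))" by (rule ae_trans[OF ae_sym[OF gf]])
    then show ?thesis using lk by blast
  qed
qed

lemma Tn_pos: assumes fL: "f \<in> L2"
  shows "inner_L2 ((Top ^^ (2 * j)) f) f = inner_L2 ((Top ^^ j) f) ((Top ^^ j) f)"
proof -
  have "(Top ^^ (2 * j)) f = (Top ^^ j) ((Top ^^ j) f)"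
    by (simp add: mult_2 funpow_add)
  then have "inner_L2 ((Top ^^ (2 * j)) f) f = inner_L2 ((Top ^^ j) ((Top ^^ j) f)) f" by simp
  also have "\<dots> = inner_L2 ((Top ^^ j) f) ((Top ^^ j) f)"
    by (rule Tn_selfadj[OF Tn_L2[OF fL] fL])
  finally show ?thesis .
qed

lemma inner_zero_left: "inner_L2 (\<lambda>x. 0) g = 0" by (simp add: inner_L2_def)

lemma T1_inj: assumes fL: "f \<in> L2" and z: "ae_eq (Top f) (\<lambda>x. 0)" shows "ae_eq f (\<lambda>x. 0)"
proof (rule INJ[OF fL])
  fix x assume x: "x \<in> JJ"
  have z2: "\<forall>v\<in>JJ. Top f v = 0" by (rule cont_ae_zero[OF Top_cont[OF fL] z])
  have xx: "pi/2 - x \<in> JJ" using x by auto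
  have "Top f (pi/2 - x) = (LINT u:{0..x}|lebesgue. f u)" by (simp add: Top_def)
  then show "(LINT u:{0..x}|lebesgue. f u) = 0" using z2 xx by simp
qed

lemma Tn_inj: assumes fL: "f \<in> L2" and z: "ae_eq ((Top ^^ k) f) (\<lambda>x. 0)" shows "ae_eq f (\<lambda>x. 0)"
  using z
proof (induction k rule: less_induct)
  case (less k)
  show ?case
  proof (cases "k \<le> 1")
    case True
    then consider "k = 0" | "k = 1" by linarith
    then show ?thesis
    proof cases
      case 1 then show ?thesis using less.prems by simp
    next
      case 2 then show ?thesis using less.prems T1_inj[OF fL] by simp
    qed
  next
    case False
    define j where "j = k - 1"
    have jk: "j < k" "k \<le> 2 * j" using False by (auto simp: j_def)
    have eq2: "(Top ^^ (2 * j)) f = (Top ^^ (2 * j - k)) ((Top ^^ k) f)"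
    proof -
      have "2 * j = (2 * j - k) + k" using jk by simp
      then show ?thesis by (metis funpow_add o_apply)
    qed
    have z1: "ae_eq ((Top ^^ (2 * j - k)) ((Top ^^ k) f)) ((Top ^^ (2 * j - k)) (\<lambda>x. 0))"
      by (rule Tn_ae[OF Tn_L2[OF fL] zero_L2 less.prems])
    have z2: "ae_eq ((Top ^^ (2 * j)) f) (\<lambda>x. 0)"
      unfolding eq2 by (rule ae_trans[OF z1 Tn_zero])
    have "inner_L2 ((Top ^^ j) f) ((Top ^^ j) f) = inner_L2 ((Top ^^ (2 * j)) f) f"
      by (rule Tn_pos[OF fL, symmetric])
    also have "\<dots> = inner_L2 (\<lambda>x. 0) f"
      by (rule inner_ae[OF Tn_L2[OF fL] zero_L2 fL z2])
    also have "\<dots> = 0" by (rule inner_zero_left)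
    finally have "ae_eq ((Top ^^ j) f) (\<lambda>x. 0)" by (rule inner_self_zero[OF Tn_L2[OF fL]])
    then show ?thesis by (rule less.IH[OF jk(1)])
  qed
qed

lemma tele: "(\<Sum>i<m. (a::real) ^ (m - Suc i) * (X (Suc i) - a * X i)) = X m - a ^ m * X 0"
proof (induction m)
  case 0 then show ?case by simp
next
  case (Suc m)
  have pw: "a ^ (m - i) = a * a ^ (m - Suc i)" if "i < m" for i
  proof -
    have "m - i = Suc (m - Suc i)" using that by simp
    then show ?thesis by simp
  qed
  have "(\<Sum>i<Suc m. a ^ (Suc m - Suc i) * (X (Suc i) - a * X i))
      = (\<Sum>i<m. a ^ (Suc m - Suc i) * (X (Suc i) - a * X i)) + (X (Suc m) - a * X m)"
    by (simp add: sum.lessThan_Suc)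
  also have "(\<Sum>i<m. a ^ (Suc m - Suc i) * (X (Suc i) - a * X i)) = (\<Sum>i<m. a * (a ^ (m - Suc i) * (X (Suc i) - a * X i)))"
    by (rule sum.cong[OF refl]) (simp add: pw mult.assoc)
  also have "\<dots> = a * (\<Sum>i<m. a ^ (m - Suc i) * (X (Suc i) - a * X i))"
    by (simp add: sum_distrib_left)
  also have "\<dots> = a * (X m - a ^ m * X 0)" by (simp add: Suc.IH)
  finally show ?case by (simp add: algebra_simps)
qed

lemma claimA:
  assumes uL: "u \<in> L2" and a: "a > 0" and m: "m \<ge> 1"
    and h: "ae_eq ((Top ^^ (2 * m)) u) (\<lambda>x. a ^ m * u x)"
  shows "ae_eq ((Top ^^ 2) u) (\<lambda>x. a * u x)"
proof -
  define d where "d x = 1 * (Top ^^ 2) u x + (- a) * u x" for x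
  have dL: "d \<in> L2" unfolding d_def[abs_def] by (rule L2_lin[OF Tn_L2[OF uL] uL])
  define X where "X i = inner_L2 ((Top ^^ (2 * i)) u) d" for i
  define Y where "Y i = inner_L2 ((Top ^^ (2 * i)) d) d" for i
  have Yeq: "Y i = X (Suc i) - a * X i" for i
  proof -
    have e1: "ae_eq ((Top ^^ (2 * i)) d) (\<lambda>x. 1 * (Top ^^ (2 * i)) ((Top ^^ 2) u) x + (- a) * (Top ^^ (2 * i)) u x)"
      unfolding d_def[abs_def] by (rule Tn_lin[OF Tn_L2[OF uL] uL])
    have e2: "(Top ^^ (2 * i)) ((Top ^^ 2) u) = (Top ^^ (2 * Suc i)) u"
    proof -
      have "2 * Suc i = 2 * i + 2" by simp
      then show ?thesis by (metis funpow_add o_apply)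
    qed
    have L3: "(\<lambda>x. 1 * (Top ^^ (2 * i)) ((Top ^^ 2) u) x + (- a) * (Top ^^ (2 * i)) u x) \<in> L2"
      by (rule L2_lin[OF Tn_L2[OF Tn_L2[OF uL]] Tn_L2[OF uL]])
    have "Y i = inner_L2 (\<lambda>x. 1 * (Top ^^ (2 * i)) ((Top ^^ 2) u) x + (- a) * (Top ^^ (2 * i)) u x) d"
      unfolding Y_def by (rule inner_ae[OF Tn_L2[OF dL] L3 dL e1])
    also have "\<dots> = 1 * inner_L2 ((Top ^^ (2 * i)) ((Top ^^ 2) u)) d + (- a) * inner_L2 ((Top ^^ (2 * i)) u) d"
      by (rule inner_lin[OF Tn_L2[OF Tn_L2[OF uL]] Tn_L2[OF uL] dL])
    also have "\<dots> = X (Suc i) - a * X i" unfolding X_def e2 by simp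
    finally show ?thesis .
  qed
  have Ynn: "0 \<le> Y i" for i
    unfolding Y_def Tn_pos[OF dL] by (rule inner_self_nonneg)
  have Xm: "X m = a ^ m * X 0"
  proof -
    have "X m = inner_L2 (\<lambda>x. a ^ m * u x) d"
      unfolding X_def by (rule inner_ae[OF Tn_L2[OF uL] L2_scale[OF uL] dL h])
    also have "\<dots> = inner_L2 (\<lambda>x. a ^ m * u x + 0 * u x) d" by simp
    also have "\<dots> = a ^ m * inner_L2 u d + 0 * inner_L2 u d" by (rule inner_lin[OF uL uL dL])
    also have "\<dots> = a ^ m * X 0" by (simp add: X_def)
    finally show ?thesis .
  qed
  have "(\<Sum>i<m. a ^ (m - Suc i) * Y i) = 0"
    using tele[where m=m and a=a and X=X] Xm by (simp add: Yeq)
  moreover have "\<forall>i\<in>{..<m}. 0 \<le> a ^ (m - Suc i) * Y i" using a Ynn by simp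
  ultimately have "\<forall>i\<in>{..<m}. a ^ (m - Suc i) * Y i = 0"
    using sum_nonneg_eq_0_iff[of "{..<m}" "\<lambda>i. a ^ (m - Suc i) * Y i"] by simp
  then have "a ^ (m - 1) * Y 0 = 0" using m by auto
  then have "Y 0 = 0" using a by simp
  then have "inner_L2 d d = 0" by (simp add: Y_def)
  then have "ae_eq d (\<lambda>x. 0)" by (rule inner_self_zero[OF dL])
  then show ?thesis unfolding ae_eq_def d_def by eventually_elim simp
qed

lemma no_pm: assumes "1 / (4 * of_int k1 + 1) = - (1 / (4 * of_int k2 + 1 :: real))" shows False
proof -
  have n1: "(4 * of_int k1 + 1 :: real) \<noteq> 0" by (rule m_nonzero)
  have n2: "(4 * of_int k2 + 1 :: real) \<noteq> 0" by (rule m_nonzero)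
  have "(4 * of_int k2 + 1 :: real) = - (4 * of_int k1 + 1)"
    using assms n1 n2 by (simp add: field_simps)
  then have "(of_int (4 * k2 + 1) :: real) = of_int (- (4 * k1 + 1))" by simp
  then have "4 * k2 + 1 = - (4 * k1 + 1)" by (simp only: of_int_eq_iff)
  then show False by presburger
qed

lemma pm_eig: assumes fL: "f \<in> L2" and h: "ae_eq (Top (Top f)) (\<lambda>x. s * s * f x)"
  shows "ae_eq (Top (\<lambda>x. 1 * Top f x + s * f x)) (\<lambda>x. s * (1 * Top f x + s * f x))"
proof -
  have TfL: "Top f \<in> L2" by (rule Top_L2[OF fL])
  have "ae_eq (Top (\<lambda>x. 1 * Top f x + s * f x)) (\<lambda>x. 1 * Top (Top f) x + s * Top f x)"
    by (rule eqJ_ae) (rule Top_lin[OF TfL fL])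
  moreover have "ae_eq (\<lambda>x. 1 * Top (Top f) x + s * Top f x) (\<lambda>x. 1 * (s * s * f x) + s * Top f x)"
    by (rule ae_lin[OF h ae_refl])
  ultimately have "ae_eq (Top (\<lambda>x. 1 * Top f x + s * f x)) (\<lambda>x. 1 * (s * s * f x) + s * Top f x)"
    by (rule ae_trans)
  moreover have "(\<lambda>x. 1 * (s * s * f x) + s * Top f x) = (\<lambda>x. s * (1 * Top f x + s * f x))"
    by (simp add: algebra_simps)
  ultimately show ?thesis by simp
qed

lemma mainM:
  assumes n: "n \<ge> 1" and fL: "f \<in> L2" and nz: "\<not> ae_eq f (\<lambda>x. 0)"
    and e: "ae_eq ((Top ^^ n) f) (\<lambda>x. c * f x)"
  shows "\<exists>k::int. c = 1 / (4 * of_int k + 1) ^ n \<and> (\<exists>A. ae_eq f (\<lambda>u. A * cos ((4 * of_int k + 1) * u)))"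
proof -
  have c0: "c \<noteq> 0"
  proof
    assume "c = 0"
    then have "ae_eq ((Top ^^ n) f) (\<lambda>x. 0)" using e by simp
    then have "ae_eq f (\<lambda>x. 0)" by (rule Tn_inj[OF fL])
    then show False using nz by simp
  qed
  have e2: "ae_eq ((Top ^^ (2 * n)) f) (\<lambda>x. c\<^sup>2 * f x)"
  proof -
    have s: "(Top ^^ (2 * n)) f = (Top ^^ n) ((Top ^^ n) f)"
      by (simp add: mult_2 funpow_add)
    have a1: "ae_eq ((Top ^^ n) ((Top ^^ n) f)) ((Top ^^ n) (\<lambda>x. c * f x))"
      by (rule Tn_ae[OF Tn_L2[OF fL] L2_scale[OF fL] e])
    have a2: "ae_eq ((Top ^^ n) (\<lambda>x. c * f x)) (\<lambda>x. c * (Top ^^ n) f x)"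
      by (rule Tn_scale[OF fL])
    have a3: "ae_eq (\<lambda>x. c * (Top ^^ n) f x) (\<lambda>x. c * (c * f x))"
      by (rule ae_scale[OF e])
    have "ae_eq ((Top ^^ (2 * n)) f) (\<lambda>x. c * (c * f x))"
      unfolding s by (rule ae_trans[OF a1 ae_trans[OF a2 a3]])
    then show ?thesis by (simp add: power2_eq_square mult.assoc)
  qed
  define a where "a = root n (c\<^sup>2)"
  have n0: "0 < n" using n by simp
  have a0: "a > 0" unfolding a_def using c0 n0 by (simp add: real_root_gt_zero)
  have an: "a ^ n = c\<^sup>2" unfolding a_def using n0 by simp
  have TT: "ae_eq ((Top ^^ 2) f) (\<lambda>x. a * f x)"
    by (rule claimA[OF fL a0 n]) (use e2 an in simp)
  define mu where "mu = sqrt a"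
  have mu0: "mu > 0" using a0 by (simp add: mu_def)
  have mumu: "mu * mu = a" using a0 by (simp add: mu_def)
  have TT2: "ae_eq (Top (Top f)) (\<lambda>x. s * s * f x)" if "s * s = a" for s
  proof -
    have "(Top ^^ 2) f = Top (Top f)" by (simp add: numeral_2_eq_2)
    then show ?thesis using TT that by simp
  qed
  define zp where "zp x = 1 * Top f x + mu * f x" for x
  define zm where "zm x = 1 * Top f x + (- mu) * f x" for x
  have zpL: "zp \<in> L2" unfolding zp_def[abs_def] by (rule L2_lin[OF Top_L2[OF fL] fL])
  have zmL: "zm \<in> L2" unfolding zm_def[abs_def] by (rule L2_lin[OF Top_L2[OF fL] fL])
  have ezp: "ae_eq (Top zp) (\<lambda>x. mu * zp x)"
    unfolding zp_def[abs_def] by (rule pm_eig[OF fL TT2[OF mumu]])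
  have ezm: "ae_eq (Top zm) (\<lambda>x. (- mu) * zm x)"
    unfolding zm_def[abs_def] by (rule pm_eig[OF fL TT2]) (simp add: mumu)
  have mun: "mu \<noteq> 0" "- mu \<noteq> 0" using mu0 by auto
  have "\<exists>lam. lam \<noteq> 0 \<and> ae_eq (Top f) (\<lambda>x. lam * f x)"
  proof (cases "ae_eq zp (\<lambda>x. 0)")
    case True
    have "ae_eq (Top f) (\<lambda>x. (- mu) * f x)"
      using True unfolding ae_eq_def zp_def by eventually_elim (simp add: algebra_simps)
    then show ?thesis using mun by blast
  next
    case zpn: False
    show ?thesis
    proof (cases "ae_eq zm (\<lambda>x. 0)")
      case True
      have "ae_eq (Top f) (\<lambda>x. mu * f x)"
        using True unfolding ae_eq_def zm_def by eventually_elim (simp add: algebra_simps)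
      then show ?thesis using mun by blast
    next
      case zmn: False
      obtain k1 :: int where k1: "mu = 1 / (4 * of_int k1 + 1)"
        using eig1[OF zpL mun(1) ezp] zpn by blast
      obtain k2 :: int where k2: "- mu = 1 / (4 * of_int k2 + 1)"
        using eig1[OF zmL mun(2) ezm] zmn by blast
      have "1 / (4 * of_int k1 + 1) = - (1 / (4 * of_int k2 + 1 :: real))" using k1 k2 by simp
      then show ?thesis using no_pm by blast
    qed
  qed
  then obtain lam where lam0: "lam \<noteq> 0" and el: "ae_eq (Top f) (\<lambda>x. lam * f x)" by blast
  obtain k :: int where lk: "lam = 1 / (4 * of_int k + 1)"
    and A: "\<exists>A. ae_eq f (\<lambda>u. A * cos ((4 * of_int k + 1) * u))"
    using eig1[OF fL lam0 el] nz by blast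
  have en: "ae_eq ((Top ^^ n) f) (\<lambda>x. lam ^ n * f x)" by (rule Tn_eig[OF fL el])
  have "c = lam ^ n"
  proof (rule ccontr)
    assume ne: "c \<noteq> lam ^ n"
    have "ae_eq (\<lambda>x. c * f x) (\<lambda>x. lam ^ n * f x)" by (rule ae_trans[OF ae_sym[OF e] en])
    then have "ae_eq f (\<lambda>x. 0)" unfolding ae_eq_def by eventually_elim (use ne in simp)
    then show False using nz by simp
  qed
  then have "c = 1 / (4 * of_int k + 1) ^ n" using lk by (simp add: power_one_over)
  then show ?thesis using A by blast
qed

lemma cos_nz: "\<not> ae_eq (\<lambda>u. cos ((4 * of_int k + 1) * u)) (\<lambda>x. 0)"
proof
  assume "ae_eq (\<lambda>u. cos ((4 * of_int k + 1) * u)) (\<lambda>x. 0)"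
  then have "\<forall>x\<in>JJ. cos ((4 * of_int k + 1) * x) = 0"
    by (intro cont_ae_zero) (auto intro!: continuous_intros)
  moreover have "(0::real) \<in> JJ" by simp
  ultimately have "cos ((4 * of_int k + 1) * (0::real)) = 0" by blast
  then show False by simp
qed

lemma cos_eig: "ae_eq ((Top ^^ n) (\<lambda>u. cos ((4 * of_int k + 1) * u)))
    (\<lambda>x. (1 / (4 * of_int k + 1)) ^ n * cos ((4 * of_int k + 1) * x))"
proof (rule Tn_eig[OF cos_L2])
  show "ae_eq (Top (\<lambda>u. cos ((4 * of_int k + 1) * u))) (\<lambda>x. 1 / (4 * of_int k + 1) * cos ((4 * of_int k + 1) * x))"
    by (rule eqJ_ae) (rule Top_cos)
qed

lemma m_pow_inj:
  assumes n: "n \<ge> 1" and e: "1 / (4 * of_int k + 1 :: real) ^ n = 1 / (4 * of_int k' + 1) ^ n"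
  shows "k = k'"
proof -
  have "(4 * of_int k + 1 :: real) ^ n = (4 * of_int k' + 1) ^ n" using e by simp
  then have "\<bar>4 * of_int k + 1 :: real\<bar> ^ n = \<bar>4 * of_int k' + 1\<bar> ^ n" by (metis power_abs)
  then have "\<bar>4 * of_int k + 1 :: real\<bar> = \<bar>4 * of_int k' + 1\<bar>"
    by (rule power_eq_imp_eq_base) (use n in auto)
  then have "(4 * of_int k + 1 :: real) = 4 * of_int k' + 1 \<or> (4 * of_int k + 1 :: real) = - (4 * of_int k' + 1)"
    by (simp only: abs_eq_iff)
  then show ?thesis
  proof
    assume "(4 * of_int k + 1 :: real) = 4 * of_int k' + 1" then show ?thesis by simp
  next
    assume h: "(4 * of_int k + 1 :: real) = - (4 * of_int k' + 1)"
    have "(of_int (4 * k + 1) :: real) = of_int (- (4 * k' + 1))" using h by simp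
    then have "4 * k + 1 = - (4 * k' + 1)" by (simp only: of_int_eq_iff)
    then show ?thesis by presburger
  qed
qed

theorem corollary3p1:
  fixes n :: nat
  assumes "n \<ge> 1"
  shows "compact_op_L2 (Top ^^ n) \<and> self_adjoint_L2 (Top ^^ n) \<and>
    {c. eigenvalue_L2 (Top ^^ n) c} = {1 / (4 * of_int k + 1) ^ n | k :: int. True} \<and>
    (\<forall>k :: int.
       (\<lambda>u. cos ((4 * of_int k + 1) * u)) \<in> L2 \<and>
       \<not> ae_eq (\<lambda>u. cos ((4 * of_int k + 1) * u)) (\<lambda>x. 0) \<and>
       (\<forall>f\<in>L2. ae_eq ((Top ^^ n) f) (\<lambda>x. (1 / (4 * of_int k + 1) ^ n) * f x) \<longleftrightarrow>
                (\<exists>a. ae_eq f (\<lambda>u. a * cos ((4 * of_int k + 1) * u)))))"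
proof -
  have n: "n \<ge> 1" by (rule assms)
  have comp: "compact_op_L2 (Top ^^ n)"
    unfolding compact_op_L2_def
  proof (intro conjI ballI allI impI)
    fix f assume "f \<in> L2" then show "(Top ^^ n) f \<in> L2" by (rule Tn_L2)
  next
    fix f g :: "real \<Rightarrow> real" and a b :: real assume "f \<in> L2" "g \<in> L2"
    then show "ae_eq ((Top ^^ n) (\<lambda>x. a * f x + b * g x)) (\<lambda>x. a * (Top ^^ n) f x + b * (Top ^^ n) g x)"
      by (rule Tn_lin)
  next
    fix f g :: "real \<Rightarrow> real" assume "f \<in> L2" "g \<in> L2" "ae_eq f g"
    then show "ae_eq ((Top ^^ n) f) ((Top ^^ n) g)" by (rule Tn_ae)
  next
    fix F :: "nat \<Rightarrow> real \<Rightarrow> real"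
    assume h: "(\<forall>k. F k \<in> L2) \<and> bounded (range (\<lambda>k. norm_L2 (F k)))"
    then have FL: "\<And>k. F k \<in> L2" and Fb: "bounded (range (\<lambda>k. norm_L2 (F k)))" by auto
    show "\<exists>r g. strict_mono r \<and> g \<in> L2 \<and> (\<lambda>k. norm_L2 (\<lambda>x. (Top ^^ n) (F (r k)) x - g x)) \<longlonglongrightarrow> 0"
      by (rule Tn_compact[OF n FL Fb])
  qed
  have sa: "self_adjoint_L2 (Top ^^ n)"
    unfolding self_adjoint_L2_def using Tn_selfadj by blast
  have ceig: "ae_eq ((Top ^^ n) (\<lambda>u. cos ((4 * of_int k + 1) * u)))
      (\<lambda>x. (1 / (4 * of_int k + 1) ^ n) * cos ((4 * of_int k + 1) * x))" for k :: int
    using cos_eig[of n k] by (simp add: power_one_over)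
  have eigset: "{c. eigenvalue_L2 (Top ^^ n) c} = {1 / (4 * of_int k + 1) ^ n | k :: int. True}"
  proof (intro set_eqI iffI)
    fix c :: real assume "c \<in> {c. eigenvalue_L2 (Top ^^ n) c}"
    then obtain f where fL: "f \<in> L2" and nz: "\<not> ae_eq f (\<lambda>x. 0)" and e: "ae_eq ((Top ^^ n) f) (\<lambda>x. c * f x)"
      by (auto simp: eigenvalue_L2_def)
    obtain k :: int where "c = 1 / (4 * of_int k + 1) ^ n" using mainM[OF n fL nz e] by blast
    then show "c \<in> {1 / (4 * of_int k + 1) ^ n | k :: int. True}" by blast
  next
    fix c :: real assume "c \<in> {1 / (4 * of_int k + 1) ^ n | k :: int. True}"
    then obtain k :: int where c: "c = 1 / (4 * of_int k + 1) ^ n" by blast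
    have "eigenvalue_L2 (Top ^^ n) c"
      unfolding eigenvalue_L2_def c using cos_L2 cos_nz ceig by blast
    then show "c \<in> {c. eigenvalue_L2 (Top ^^ n) c}" by simp
  qed
  have each: "(\<lambda>u. cos ((4 * of_int k + 1) * u)) \<in> L2 \<and>
       \<not> ae_eq (\<lambda>u. cos ((4 * of_int k + 1) * u)) (\<lambda>x. 0) \<and>
       (\<forall>f\<in>L2. ae_eq ((Top ^^ n) f) (\<lambda>x. (1 / (4 * of_int k + 1) ^ n) * f x) \<longleftrightarrow>
                (\<exists>a. ae_eq f (\<lambda>u. a * cos ((4 * of_int k + 1) * u))))" for k :: int
  proof (intro conjI ballI iffI)
    show "(\<lambda>u. cos ((4 * of_int k + 1) * u)) \<in> L2" by (rule cos_L2)
    show "\<not> ae_eq (\<lambda>u. cos ((4 * of_int k + 1) * u)) (\<lambda>x. 0)" by (rule cos_nz)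
  next
    fix f assume fL: "f \<in> L2" and e: "ae_eq ((Top ^^ n) f) (\<lambda>x. (1 / (4 * of_int k + 1) ^ n) * f x)"
    show "\<exists>a. ae_eq f (\<lambda>u. a * cos ((4 * of_int k + 1) * u))"
    proof (cases "ae_eq f (\<lambda>x. 0)")
      case True
      then have "ae_eq f (\<lambda>u. 0 * cos ((4 * of_int k + 1) * u))" by simp
      then show ?thesis by blast
    next
      case False
      obtain k' :: int where k': "1 / (4 * of_int k + 1) ^ n = 1 / (4 * of_int k' + 1 :: real) ^ n"
        and A: "\<exists>A. ae_eq f (\<lambda>u. A * cos ((4 * of_int k' + 1) * u))"
        using mainM[OF n fL False e] by blast
      have "k = k'" by (rule m_pow_inj[OF n k'])
      then show ?thesis using A by simp
    qed
  next
    fix f assume fL: "f \<in> L2" and h: "\<exists>a. ae_eq f (\<lambda>u. a * cos ((4 * of_int k + 1) * u))"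
    then obtain a where a: "ae_eq f (\<lambda>u. a * cos ((4 * of_int k + 1) * u))" by blast
    have cL: "(\<lambda>u. a * cos ((4 * of_int k + 1) * u)) \<in> L2" by (rule L2_scale[OF cos_L2])
    have s1: "ae_eq ((Top ^^ n) f) ((Top ^^ n) (\<lambda>u. a * cos ((4 * of_int k + 1) * u)))"
      by (rule Tn_ae[OF fL cL a])
    have s2: "ae_eq ((Top ^^ n) (\<lambda>u. a * cos ((4 * of_int k + 1) * u))) (\<lambda>x. a * (Top ^^ n) (\<lambda>u. cos ((4 * of_int k + 1) * u)) x)"
      by (rule Tn_scale[OF cos_L2])
    have s3: "ae_eq (\<lambda>x. a * (Top ^^ n) (\<lambda>u. cos ((4 * of_int k + 1) * u)) x)
        (\<lambda>x. a * ((1 / (4 * of_int k + 1) ^ n) * cos ((4 * of_int k + 1) * x)))"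
      by (rule ae_scale[OF ceig])
    have s4: "ae_eq (\<lambda>x. (1 / (4 * of_int k + 1) ^ n) * (a * cos ((4 * of_int k + 1) * x))) (\<lambda>x. (1 / (4 * of_int k + 1) ^ n) * f x)"
      by (rule ae_scale[OF ae_sym[OF a]])
    have s34: "ae_eq (\<lambda>x. a * (Top ^^ n) (\<lambda>u. cos ((4 * of_int k + 1) * u)) x) (\<lambda>x. (1 / (4 * of_int k + 1) ^ n) * f x)"
    proof -
      have eqf: "(\<lambda>x. a * ((1 / (4 * of_int k + 1) ^ n) * cos ((4 * of_int k + 1) * x)))
          = (\<lambda>x. (1 / (4 * of_int k + 1) ^ n) * (a * cos ((4 * of_int k + 1) * (x::real))))"
        by (simp add: mult.left_commute)
      show ?thesis using ae_trans[OF s3[unfolded eqf] s4] .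
    qed
    show "ae_eq ((Top ^^ n) f) (\<lambda>x. (1 / (4 * of_int k + 1) ^ n) * f x)"
      by (rule ae_trans[OF s1 ae_trans[OF s2 s34]])
  qed
  show ?thesis using comp sa eigset each by blast
qed

end
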